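(* Let $s$ be a stream over $\Sigma$ with hidden PFSA generator $G_s$, let $W$ be the zero model (flat white noise generator), and let $\epsilon>0$. With $\ell=\ln(1/\epsilon)/\ln|\Sigma|$, $$\lim_{|s|\to\infty}|\Theta(G_s,W)-\hat{\zeta}(s,\ell)|\le\epsilon.$$
   Context: $\Sigma=\{\sigma_1,\dots,\sigma_{|\Sigma|}\}$ is finite, $\Sigma^\star$ the finite strings, $|x|$ the length of $x$. For a string $s$, $\#^s(y)$ is the overlapping count of $y$ in $s$; symbolic derivative $\phi^s(x)|_i=\#^s(x\sigma_i)/\sum_j\#^s(x\sigma_j)$; $\mathcal{U}_\Sigma$ is the uniform distribution on $\Sigma$. $W$ is the single-state PFSA emitting each symbol i.i.d. with probability $1/|\Sigma|$. $\Theta(G_1,G_2)=\frac{|\Sigma|-1}{|\Sigma|}\lim_{|s_1|,|s_2|\to\infty}\sum_{x\in\Sigma^\star}\|\phi^{s_1}(x)-\phi^{s_2}(x)\|_\infty/|\Sigma|^{2|x|}$ for $s_i$ generated by $G_i$. The partial white noise deviation estimator is $\hat{\zeta}(s,\ell)=\frac{|\Sigma|-1}{|\Sigma|}\sum_{x\in\Sigma^\star,\,|x|\le\ell}\frac{1}{|\Sigma|^{2|x|}}\|\phi^s(x)-\mathcal{U}_\Sigma\|_\infty$, i.e. the sum restricted to strings of length at most $\ell$. *)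

theory Defs
  imports "HOL-Probability.Probability"
begin

text \<open>A PFSA over alphabet 'a with (finite) state type 'q: transition map delta,
  symbol emission probabilities pitilde (the transition on a symbol is only "defined"
  when its probability is positive), and a start state.\<close>

record ('q, 'a) pfsa =
  delta   :: "'q \<Rightarrow> 'a \<Rightarrow> 'q"
  pitilde :: "'q \<Rightarrow> 'a \<Rightarrow> real"
  init    :: "'q"

definition is_pfsa :: "('q::finite, 'a::finite) pfsa \<Rightarrow> bool" where
  "is_pfsa G \<longleftrightarrow> (\<forall>q a. pitilde G q a \<ge> 0) \<and> (\<forall>q. (\<Sum>a\<in>UNIV. pitilde G q a) = 1)"

fun delta_star :: "('q, 'a) pfsa \<Rightarrow> 'q \<Rightarrow> 'a list \<Rightarrow> 'q" where
  "delta_star G q [] = q"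
| "delta_star G q (a # w) = delta_star G (delta G q a) w"

fun word_prob :: "('q, 'a) pfsa \<Rightarrow> 'q \<Rightarrow> 'a list \<Rightarrow> real" where
  "word_prob G q [] = 1"
| "word_prob G q (a # w) = pitilde G q a * word_prob G (delta G q a) w"

definition strongly_connected :: "('q, 'a) pfsa \<Rightarrow> bool" where
  "strongly_connected G \<longleftrightarrow>
     (\<forall>q q'. \<exists>w. word_prob G q w > 0 \<and> delta_star G q w = q')"

definition is_stream_law :: "('q, 'a) pfsa \<Rightarrow> 'a stream measure \<Rightarrow> bool" where
  "is_stream_law G M \<longleftrightarrow> prob_space M \<and>
     sets M = sets (stream_space (count_space UNIV)) \<and>
     (\<forall>w. emeasure M {\<omega> \<in> space M. stake (length w) \<omega> = w} = ennreal (word_prob G (init G) w))"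

definition W :: "(unit, 'a::finite) pfsa" where
  "W = \<lparr> delta = (\<lambda>_ _. ()), pitilde = (\<lambda>_ _. 1 / real CARD('a)), init = () \<rparr>"

definition occ_count :: "'a list \<Rightarrow> 'a list \<Rightarrow> nat" where
  "occ_count s y = card {i. i + length y \<le> length s \<and> take (length y) (drop i s) = y}"

definition sym_deriv :: "'a list \<Rightarrow> 'a list \<Rightarrow> 'a::finite \<Rightarrow> real" where
  "sym_deriv s x \<sigma> = real (occ_count s (x @ [\<sigma>])) / (\<Sum>\<tau>\<in>UNIV. real (occ_count s (x @ [\<tau>])))"

definition unif :: "'a::finite \<Rightarrow> real" where
  "unif \<sigma> = 1 / real CARD('a)"

definition sup_norm :: "('a::finite \<Rightarrow> real) \<Rightarrow> real" where
  "sup_norm f = Max (range (\<lambda>\<sigma>. \<bar>f \<sigma>\<bar>))"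

definition theta_sum :: "'a::finite list \<Rightarrow> 'a list \<Rightarrow> real" where
  "theta_sum s1 s2 = (real CARD('a) - 1) / real CARD('a) *
     infsum (\<lambda>x. sup_norm (\<lambda>\<sigma>. sym_deriv s1 x \<sigma> - sym_deriv s2 x \<sigma>) / real CARD('a) ^ (2 * length x)) UNIV"

definition Theta :: "('q1, 'a::finite) pfsa \<Rightarrow> ('q2, 'a) pfsa \<Rightarrow> real" where
  "Theta G1 G2 = (THE \<theta>. \<forall>M1 M2. is_stream_law G1 M1 \<longrightarrow> is_stream_law G2 M2 \<longrightarrow>
      (AE \<omega> in M1 \<Otimes>\<^sub>M M2.
         ((\<lambda>(n1, n2). theta_sum (stake n1 (fst \<omega>)) (stake n2 (snd \<omega>))) \<longlongrightarrow> \<theta>)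
           (sequentially \<times>\<^sub>F sequentially)))"

definition zeta_hat :: "'a::finite list \<Rightarrow> real \<Rightarrow> real" where
  "zeta_hat s l = (real CARD('a) - 1) / real CARD('a) *
     (\<Sum>x\<in>{x :: 'a list. real (length x) \<le> l}.
        sup_norm (\<lambda>\<sigma>. sym_deriv s x \<sigma> - unif \<sigma>) / real CARD('a) ^ (2 * length x))"

end

theory Submission
  imports Defs "HOL-Library.Discrete_Functions"
begin

lemma word_prob_append: "word_prob G q (u @ v) = word_prob G q u * word_prob G (delta_star G q u) v"
  by (induction u arbitrary: q) auto

lemma delta_star_append: "delta_star G q (u @ v) = delta_star G (delta_star G q u) v"
  by (induction u arbitrary: q) auto

lemma word_prob_nonneg: "is_pfsa G \<Longrightarrow> word_prob G q w \<ge> 0"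
  by (induction w arbitrary: q) (auto simp: is_pfsa_def)

definition Lw :: "nat \<Rightarrow> 'a list set" where "Lw n = {w. length w = n}"

lemma finite_Lw[simp]: "finite (Lw n :: ('a::finite) list set)"
  unfolding Lw_def using finite_lists_length_eq[of "UNIV::'a set" n] by simp

lemma Lw_Suc: "Lw (Suc n) = (\<lambda>(a,w). a # w) ` (UNIV \<times> Lw n)"
  unfolding Lw_def by (auto simp: image_iff length_Suc_conv)

lemma sum_Lw_Suc:
  fixes f :: "'a::finite list \<Rightarrow> real"
  shows "(\<Sum>w\<in>Lw (Suc n). f w) = (\<Sum>a\<in>UNIV. \<Sum>w\<in>Lw n. f (a # w))"
proof -
  have "inj_on (\<lambda>(a,w). a # w) (UNIV \<times> Lw n)" by (auto simp: inj_on_def)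
  then have "(\<Sum>w\<in>Lw (Suc n). f w) = (\<Sum>p\<in>UNIV \<times> Lw n. (\<lambda>(a,w). f (a # w)) p)"
    unfolding Lw_Suc by (subst sum.reindex) (auto simp: case_prod_beta intro!: sum.cong)
  also have "\<dots> = (\<Sum>a\<in>UNIV. \<Sum>w\<in>Lw n. f (a # w))"
    by (subst sum.cartesian_product) simp
  finally show ?thesis .
qed

lemma sum_Lw_append:
  fixes f :: "'a::finite list \<Rightarrow> real"
  shows "(\<Sum>w\<in>Lw (m + n). f w) = (\<Sum>u\<in>Lw m. \<Sum>v\<in>Lw n. f (u @ v))"
proof (induction m arbitrary: f)
  case 0
  then show ?case by (simp add: Lw_def)
next
  case (Suc m)
  have "(\<Sum>w\<in>Lw (Suc m + n). f w) = (\<Sum>a\<in>UNIV. \<Sum>w\<in>Lw (m+n). f (a # w))"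
    by (simp add: sum_Lw_Suc)
  also have "\<dots> = (\<Sum>a\<in>UNIV. \<Sum>u\<in>Lw m. \<Sum>v\<in>Lw n. f (a # u @ v))"
    using Suc by simp
  also have "\<dots> = (\<Sum>u\<in>Lw (Suc m). \<Sum>v\<in>Lw n. f (u @ v))"
    by (simp add: sum_Lw_Suc)
  finally show ?case .
qed

lemma sum_word_prob:
  assumes "is_pfsa G"
  shows "(\<Sum>w\<in>Lw n. word_prob G q w) = 1"
proof (induction n arbitrary: q)
  case 0
  then show ?case by (simp add: Lw_def)
next
  case (Suc n)
  then show ?case using assms by (simp add: sum_Lw_Suc sum_distrib_left[symmetric] is_pfsa_def)
qed


locale stream_law =
  fixes G :: "('q::finite, 'a::finite) pfsa" and M :: "'a stream measure"
  assumes pfsa: "is_pfsa G" and law: "is_stream_law G M"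
begin

lemma prob: "prob_space M" using law by (simp add: is_stream_law_def)

sublocale prob_space M by (rule prob)

lemma setsM: "sets M = sets (stream_space (count_space UNIV))"
  using law by (simp add: is_stream_law_def)

lemma meas_stake: "stake n \<in> measurable M (count_space UNIV)"
  using measurable_stake[of n] by (subst measurable_cong_sets[OF setsM refl])

lemma meas_fun_stake: "(\<lambda>\<omega>. h (stake n \<omega>)) \<in> borel_measurable M"
  by (rule measurable_compose[OF meas_stake]) simp

lemma cyl_sets: "{\<omega> \<in> space M. stake n \<omega> = w} \<in> sets M"
proof -
  have "stake n -` {w} \<inter> space M \<in> sets M" by (rule measurable_sets[OF meas_stake]) simp
  moreover have "stake n -` {w} \<inter> space M = {\<omega> \<in> space M. stake n \<omega> = w}" by auto
  ultimately show ?thesis by simp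
qed

lemma integ_cyl: "integrable M (\<lambda>\<omega>. indicator {\<omega> \<in> space M. stake n \<omega> = w} \<omega> * (c::real))"
proof -
  have "{\<omega> \<in> space M. stake n \<omega> = w} \<inter> space M = {\<omega> \<in> space M. stake n \<omega> = w}" by auto
  then show ?thesis using cyl_sets[of n w] by (simp add: integrable_indicator_iff less_top[symmetric])
qed

lemma measure_cyl: "length w = n \<Longrightarrow> measure M {\<omega> \<in> space M. stake n \<omega> = w} = word_prob G (init G) w"
  using law word_prob_nonneg[OF pfsa] by (auto simp: is_stream_law_def measure_def)

lemma integral_stake:
  fixes h :: "'a list \<Rightarrow> real"
  shows "(\<integral>\<omega>. h (stake n \<omega>) \<partial>M) = (\<Sum>w\<in>Lw n. word_prob G (init G) w * h w)"
proof -
  have eq: "(\<integral>\<omega>. h (stake n \<omega>) \<partial>M) = (\<integral>\<omega>. (\<Sum>w\<in>Lw n. indicator {\<omega> \<in> space M. stake n \<omega> = w} \<omega> * h w) \<partial>M)"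
  proof (rule Bochner_Integration.integral_cong[OF refl])
    fix \<omega> assume "\<omega> \<in> space M"
    have "(\<Sum>w\<in>Lw n. indicator {\<omega> \<in> space M. stake n \<omega> = w} \<omega> * h w) = (\<Sum>w\<in>{stake n \<omega>}. h w)"
      using \<open>\<omega> \<in> space M\<close> by (intro sum.mono_neutral_cong_right) (auto simp: Lw_def indicator_def finite_Lw[unfolded Lw_def])
    then show "h (stake n \<omega>) = (\<Sum>w\<in>Lw n. indicator {\<omega> \<in> space M. stake n \<omega> = w} \<omega> * h w)" by simp
  qed
  also have "\<dots> = (\<Sum>w\<in>Lw n. (\<integral>\<omega>. indicator {\<omega> \<in> space M. stake n \<omega> = w} \<omega> * h w \<partial>M))"
    by (rule Bochner_Integration.integral_sum) (rule integ_cyl)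
  also have "\<dots> = (\<Sum>w\<in>Lw n. word_prob G (init G) w * h w)"
    by (intro sum.cong refl) (simp add: cyl_sets measure_cyl Lw_def)
  finally show ?thesis .
qed

lemma integrable_stake[simp]: "integrable M (\<lambda>\<omega>. (h (stake n \<omega>) :: real))"
proof -
  have "integrable M (\<lambda>\<omega>. (\<Sum>w\<in>Lw n. indicator {\<omega> \<in> space M. stake n \<omega> = w} \<omega> * h w))"
    by (rule Bochner_Integration.integrable_sum, rule integ_cyl)
  then show ?thesis
  proof (rule Bochner_Integration.integrable_cong[THEN iffD1, OF refl, rotated])
    fix \<omega> assume "\<omega> \<in> space M"
    have "(\<Sum>w\<in>Lw n. indicator {\<omega> \<in> space M. stake n \<omega> = w} \<omega> * h w) = (\<Sum>w\<in>{stake n \<omega>}. h w)"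
      using \<open>\<omega> \<in> space M\<close> by (intro sum.mono_neutral_cong_right) (auto simp: Lw_def indicator_def finite_Lw[unfolded Lw_def])
    then show "(\<Sum>w\<in>Lw n. indicator {\<omega> \<in> space M. stake n \<omega> = w} \<omega> * h w) = h (stake n \<omega>)" by simp
  qed
qed

end

context stream_law begin

definition qs :: "nat \<Rightarrow> 'a stream \<Rightarrow> 'q" where
  "qs i \<omega> = delta_star G (init G) (stake i \<omega>)"

definition PH :: "('q \<Rightarrow> 'a list \<Rightarrow> real) \<Rightarrow> nat \<Rightarrow> 'q \<Rightarrow> real" where
  "PH H k q = (\<Sum>v\<in>Lw k. word_prob G q v * H q v)"

definition Eh :: "('q \<Rightarrow> 'a list \<Rightarrow> real) \<Rightarrow> nat \<Rightarrow> nat \<Rightarrow> 'a list \<Rightarrow> real" where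
  "Eh H k i w = H (delta_star G (init G) (take i w)) (drop i w) - PH H k (delta_star G (init G) (take i w))"

definition eH :: "('q \<Rightarrow> 'a list \<Rightarrow> real) \<Rightarrow> nat \<Rightarrow> nat \<Rightarrow> 'a stream \<Rightarrow> real" where
  "eH H k i \<omega> = H (qs i \<omega>) (stake k (sdrop i \<omega>)) - PH H k (qs i \<omega>)"

lemma eH_stake: "eH H k i \<omega> = Eh H k i (stake (i+k) \<omega>)"
  by (simp add: eH_def Eh_def qs_def take_stake drop_stake)

lemma eH_meas[measurable]: "eH H k i \<in> borel_measurable M"
  unfolding eH_stake by (rule meas_fun_stake)

lemma PH_bound: assumes "\<And>q v. \<bar>H q v\<bar> \<le> B" shows "\<bar>PH H k q\<bar> \<le> B"
proof -
  have "\<bar>PH H k q\<bar> \<le> (\<Sum>v\<in>Lw k. \<bar>word_prob G q v * H q v\<bar>)"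
    unfolding PH_def by (rule sum_abs)
  also have "\<dots> \<le> (\<Sum>v\<in>Lw k. word_prob G q v * B)"
    using assms word_prob_nonneg[OF pfsa]
    by (intro sum_mono) (simp add: abs_mult mult_left_mono)
  also have "\<dots> = B" by (simp add: sum_distrib_right[symmetric] sum_word_prob[OF pfsa])
  finally show ?thesis .
qed

lemma eH_bound: assumes "\<And>q v. \<bar>H q v\<bar> \<le> B" shows "\<bar>eH H k i \<omega>\<bar> \<le> 2 * B"
  using assms[of "qs i \<omega>" "stake k (sdrop i \<omega>)"] PH_bound[where H=H and B=B and k=k and q="qs i \<omega>", OF assms]
  unfolding eH_def by linarith

lemma orth:
  fixes F :: "'a list \<Rightarrow> real"
  shows "(\<integral>\<omega>. F (stake j \<omega>) * eH H k j \<omega> \<partial>M) = 0"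
proof -
  have "(\<integral>\<omega>. F (stake j \<omega>) * eH H k j \<omega> \<partial>M) = (\<integral>\<omega>. (\<lambda>w. F (take j w) * Eh H k j w) (stake (j+k) \<omega>) \<partial>M)"
    by (simp add: eH_stake take_stake)
  also have "\<dots> = (\<Sum>w\<in>Lw (j+k). word_prob G (init G) w * (F (take j w) * Eh H k j w))"
    by (rule integral_stake)
  also have "\<dots> = (\<Sum>u\<in>Lw j. \<Sum>v\<in>Lw k. word_prob G (init G) (u @ v) * (F (take j (u @ v)) * Eh H k j (u @ v)))"
    by (rule sum_Lw_append)
  also have "\<dots> = (\<Sum>u\<in>(Lw j :: 'a list set). (0::real))"
  proof (rule sum.cong[OF refl])
    fix u :: "'a list" assume "u \<in> Lw j"
    then have lu: "length u = j" by (simp add: Lw_def)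
    define q where "q = delta_star G (init G) u"
    have "(\<Sum>v\<in>Lw k. word_prob G (init G) (u @ v) * (F (take j (u @ v)) * Eh H k j (u @ v)))
        = (\<Sum>v\<in>Lw k. word_prob G (init G) u * F u * (word_prob G q v * H q v - word_prob G q v * PH H k q))"
      by (intro sum.cong refl) (simp add: lu word_prob_append Eh_def q_def algebra_simps)
    also have "\<dots> = word_prob G (init G) u * F u * (PH H k q - (\<Sum>v\<in>Lw k. word_prob G q v) * PH H k q)"
      by (simp add: sum_distrib_left[symmetric] sum_subtractf sum_distrib_right[symmetric] PH_def)
    also have "\<dots> = 0" by (simp add: sum_word_prob[OF pfsa])
    finally show "(\<Sum>v\<in>Lw k. word_prob G (init G) (u @ v) * (F (take j (u @ v)) * Eh H k j (u @ v))) = 0" .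
  qed
  finally show ?thesis by simp
qed

lemma orth2:
  assumes "i + k \<le> j"
  shows "(\<integral>\<omega>. eH H k i \<omega> * eH H k j \<omega> \<partial>M) = 0"
proof -
  have "eH H k i \<omega> = (\<lambda>w. Eh H k i (take (i+k) w)) (stake j \<omega>)" for \<omega>
    using assms by (simp add: eH_stake take_stake min_def)
  then show ?thesis using orth[of "\<lambda>w. Eh H k i (take (i+k) w)" j H k] by simp
qed

lemma integrable_bdd:
  assumes "f \<in> borel_measurable M" "\<And>\<omega>. \<bar>f \<omega>\<bar> \<le> (B::real)"
  shows "integrable M f"
  using assms by (intro integrable_const_bound[where B=B]) auto

lemma second_moment:
  assumes "\<And>q v. \<bar>H q v\<bar> \<le> B"
  shows "(\<integral>\<omega>. (\<Sum>i<n. eH H k i \<omega>)^2 \<partial>M) \<le> 2 * real k * (2*B)^2 * real n"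
proof -
  let ?e = "\<lambda>i \<omega>. eH H k i \<omega>"
  have B0: "0 \<le> B" using assms[of undefined undefined] by linarith
  have int: "integrable M (\<lambda>\<omega>. ?e i \<omega> * ?e j \<omega>)" for i j
  proof (rule integrable_bdd[where B="(2*B)*(2*B)"])
    show "\<bar>?e i \<omega> * ?e j \<omega>\<bar> \<le> 2 * B * (2 * B)" for \<omega>
      unfolding abs_mult by (intro mult_mono eH_bound assms) (use B0 in auto)
  qed simp
  have bnd: "\<bar>(\<integral>\<omega>. ?e i \<omega> * ?e j \<omega> \<partial>M)\<bar> \<le> (2*B)^2" for i j
  proof -
    have "\<bar>(\<integral>\<omega>. ?e i \<omega> * ?e j \<omega> \<partial>M)\<bar> \<le> (\<integral>\<omega>. \<bar>?e i \<omega> * ?e j \<omega>\<bar> \<partial>M)"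
      by (rule integral_abs_bound)
    also have "\<dots> \<le> (\<integral>\<omega>. (2*B)^2 \<partial>M)"
    proof (rule integral_mono)
      show "integrable M (\<lambda>\<omega>. \<bar>?e i \<omega> * ?e j \<omega>\<bar>)" using int by auto
      show "\<bar>?e i \<omega> * ?e j \<omega>\<bar> \<le> (2*B)^2" for \<omega>
        unfolding abs_mult power2_eq_square by (intro mult_mono eH_bound assms) (use B0 in auto)
    qed simp
    finally show ?thesis using prob_space by simp
  qed
  have "(\<integral>\<omega>. (\<Sum>i<n. ?e i \<omega>)^2 \<partial>M) = (\<integral>\<omega>. (\<Sum>i<n. \<Sum>j<n. ?e i \<omega> * ?e j \<omega>) \<partial>M)"
    by (simp add: power2_eq_square sum_product)
  also have "\<dots> = (\<Sum>i<n. \<Sum>j<n. (\<integral>\<omega>. ?e i \<omega> * ?e j \<omega> \<partial>M))"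
    using int by (simp add: Bochner_Integration.integral_sum Bochner_Integration.integrable_sum)
  also have "\<dots> \<le> (\<Sum>i<n. 2 * real k * (2*B)^2)"
  proof (rule sum_mono)
    fix i assume "i \<in> {..<n}"
    let ?S = "{j. j < n \<and> j < i + k \<and> i < j + k}"
    have "(\<Sum>j<n. (\<integral>\<omega>. ?e i \<omega> * ?e j \<omega> \<partial>M)) = (\<Sum>j\<in>?S. (\<integral>\<omega>. ?e i \<omega> * ?e j \<omega> \<partial>M))"
    proof (rule sum.mono_neutral_right)
      show "\<forall>j\<in>{..<n} - ?S. (\<integral>\<omega>. ?e i \<omega> * ?e j \<omega> \<partial>M) = 0"
      proof
        fix j assume "j \<in> {..<n} - ?S"
        then have "i + k \<le> j \<or> j + k \<le> i" by auto
        then show "(\<integral>\<omega>. ?e i \<omega> * ?e j \<omega> \<partial>M) = 0"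
          using orth2[of i k j H] orth2[of j k i H] by (auto simp: mult.commute)
      qed
    qed auto
    also have "\<dots> \<le> (\<Sum>j\<in>?S. (2*B)^2)"
      by (rule sum_mono) (use bnd in \<open>auto simp: abs_le_iff\<close>)
    also have "\<dots> = real (card ?S) * (2*B)^2" by simp
    also have "\<dots> \<le> 2 * real k * (2*B)^2"
    proof (rule mult_right_mono)
      have "?S \<subseteq> {i + 1 - k..<i+k}" by auto
      then have "card ?S \<le> card {i + 1 - k..<i+k}" by (intro card_mono) auto
      also have "\<dots> \<le> 2 * k" by simp
      finally show "real (card ?S) \<le> 2 * real k" by linarith
    qed simp
    finally show "(\<Sum>j<n. (\<integral>\<omega>. ?e i \<omega> * ?e j \<omega> \<partial>M)) \<le> 2 * real k * (2*B)^2" .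
  qed
  also have "\<dots> = 2 * real k * (2*B)^2 * real n" by simp
  finally show ?thesis .
qed

end

lemma incr_bound:
  fixes x :: "nat \<Rightarrow> real"
  assumes "\<And>n. \<bar>x (Suc n) - x n\<bar> \<le> B" "a \<le> n"
  shows "\<bar>x n - x a\<bar> \<le> B * real (n - a)"
  using assms(2)
proof (induction n)
  case 0 then show ?case by simp
next
  case (Suc n)
  show ?case
  proof (cases "a = Suc n")
    case True then show ?thesis by simp
  next
    case False
    then have "a \<le> n" using Suc.prems by simp
    then have "\<bar>x n - x a\<bar> \<le> B * real (n - a)" by (rule Suc.IH)
    moreover have "real (Suc n - a) = real (n - a) + 1" using \<open>a \<le> n\<close> by simp
    ultimately show ?thesis using assms(1)[of n] by (simp add: algebra_simps)
  qed
qed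

lemma det_slln:
  fixes x :: "nat \<Rightarrow> real"
  assumes x0: "x 0 = 0" and inc: "\<And>n. \<bar>x (Suc n) - x n\<bar> \<le> B"
    and ev: "\<And>j::nat. eventually (\<lambda>r. \<bar>x (r^2)\<bar> \<le> real (r^2) / real (Suc j)) sequentially"
  shows "(\<lambda>n. x n / real n) \<longlonglongrightarrow> 0"
proof (rule LIMSEQ_I)
  fix e :: real assume e: "0 < e"
  have B0: "0 \<le> B" using inc[of 0] by linarith
  obtain j :: nat where j: "inverse (real (Suc j)) < e / 2"
    using reals_Archimedean[of "e/2"] e by auto
  obtain R0 where R0: "\<And>r. r \<ge> R0 \<Longrightarrow> \<bar>x (r^2)\<bar> \<le> real (r^2) / real (Suc j)"
    using ev[of j] unfolding eventually_sequentially by auto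
  obtain R1 :: nat where R1: "4 * B / e < real R1"
    using reals_Archimedean2 by auto
  define R where "R = max R0 R1 + 1"
  show "\<exists>N. \<forall>n\<ge>N. norm (x n / real n - 0) < e"
  proof (intro exI allI impI)
    fix n assume n: "R^2 \<le> n"
    define r where "r = floor_sqrt n"
    have rR: "R \<le> r" unfolding r_def using n by (simp add: le_floor_sqrt_iff)
    have r1: "1 \<le> r" and rR0: "R0 \<le> r" and rR1: "R1 < r" using rR by (auto simp: R_def)
    have r2n: "r^2 \<le> n" unfolding r_def by simp
    have nr: "n < (Suc r)^2" unfolding r_def by (rule Suc_floor_sqrt_power2_gt)
    have diff: "real (n - r^2) \<le> 2 * real r"
    proof -
      have "n - r^2 \<le> 2 * r" using nr by (simp add: power2_eq_square)
      then show ?thesis by linarith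
    qed
    have rpos: "0 < real r" using r1 by simp
    have "\<bar>x n\<bar> \<le> \<bar>x (r^2)\<bar> + B * real (n - r^2)"
      using incr_bound[of x B, OF inc r2n] by linarith
    also have "\<dots> \<le> real (r^2) / real (Suc j) + B * (2 * real r)"
      using R0[OF rR0] diff B0 by (intro add_mono mult_left_mono) auto
    finally have xn: "\<bar>x n\<bar> \<le> real r ^ 2 / real (Suc j) + 2 * B * real r" by simp
    have nge: "real r ^ 2 \<le> real n" using r2n by (metis of_nat_le_iff of_nat_power)
    have rsq: "0 < real r ^ 2" using rpos by simp
    have "\<bar>x n / real n\<bar> = \<bar>x n\<bar> / real n" using rsq nge by simp
    also have "\<dots> \<le> \<bar>x n\<bar> / real r ^ 2"
      using rsq nge by (intro divide_left_mono) (auto intro!: mult_pos_pos simp: power2_eq_square)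
    also have "\<dots> \<le> (real r ^ 2 / real (Suc j) + 2 * B * real r) / real r ^ 2"
      using xn rsq by (intro divide_right_mono) auto
    also have "\<dots> = inverse (real (Suc j)) + 2 * B / real r"
    proof -
      have "(real r ^ 2 / real (Suc j) + 2 * B * real r) / real r ^ 2
          = (real r ^ 2 / real (Suc j)) / real r ^ 2 + (2 * B * real r) / real r ^ 2"
        by (rule add_divide_distrib)
      also have "(real r ^ 2 / real (Suc j)) / real r ^ 2 = inverse (real (Suc j))"
        using rsq by (simp add: divide_inverse)
      also have "(2 * B * real r) / real r ^ 2 = 2 * B / real r"
        using rpos by (simp add: power2_eq_square)
      finally show ?thesis .
    qed
    also have "\<dots> < e / 2 + e / 2"
    proof (rule add_less_le_mono[OF j])
      have "4 * B / e < real r" using R1 rR1 by linarith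
      then have "4 * B < e * real r" using e by (simp add: field_simps)
      then show "2 * B / real r \<le> e / 2" using rpos by (simp add: field_simps)
    qed
    finally show "norm (x n / real n - 0) < e" by simp
  qed
qed


context stream_law begin

lemma slln_eH:
  assumes HB: "\<And>q v. \<bar>H q v\<bar> \<le> B"
  shows "AE \<omega> in M. (\<lambda>n. (\<Sum>i<n. eH H k i \<omega>) / real n) \<longlonglongrightarrow> 0"
proof -
  define x where "x n \<omega> = (\<Sum>i<n. eH H k i \<omega>)" for n \<omega>
  define C where "C = 2 * real k * (2*B)^2"
  have B0: "0 \<le> B" using HB[of undefined undefined] by linarith
  have C0: "0 \<le> C" unfolding C_def using B0 by simp
  have xmeas[measurable]: "x n \<in> borel_measurable M" for n unfolding x_def by measurable
  have xbnd: "\<bar>x n \<omega>\<bar> \<le> real n * (2 * B)" for n \<omega>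
  proof -
    have "\<bar>x n \<omega>\<bar> \<le> (\<Sum>i<n. \<bar>eH H k i \<omega>\<bar>)" unfolding x_def by (rule sum_abs)
    also have "\<dots> \<le> (\<Sum>i<n. 2 * B)" by (intro sum_mono eH_bound HB)
    finally show ?thesis by simp
  qed
  have ev: "AE \<omega> in M. eventually (\<lambda>r. \<bar>x (r^2) \<omega>\<bar> \<le> real (r^2) / real (Suc j)) sequentially" for j :: nat
  proof -
    define A where "A r = {\<omega> \<in> space M. real (r^2) / real (Suc j) < \<bar>x (r^2) \<omega>\<bar>}" for r
    have Asets: "A r \<in> sets M" for r unfolding A_def by measurable
    have Ameas: "measure M (A r) \<le> C * real (Suc j)^2 * inverse (real r ^ 2)" for r
    proof (cases "r = 0")
      case True
      then have "A r = {}" by (auto simp: A_def x_def)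
      then show ?thesis using C0 by simp
    next
      case False
      define a where "a = real (r^2) / real (Suc j)"
      have apos: "0 < a" using False by (simp add: a_def)
      have "measure M (A r) \<le> measure M {\<omega> \<in> space M. \<bar>x (r^2) \<omega>\<bar> \<ge> a}"
        by (rule finite_measure_mono) (auto simp: A_def a_def)
      also have "\<dots> \<le> (\<integral>\<omega>. (x (r^2) \<omega>)^2 \<partial>M) / a^2"
      proof (rule second_moment_method)
        show "integrable M (\<lambda>\<omega>. (x (r^2) \<omega>)^2)"
        proof (rule integrable_bdd[where B="(real (r^2) * (2*B))^2"])
          show "\<bar>(x (r^2) \<omega>)^2\<bar> \<le> (real (r^2) * (2*B))^2" for \<omega>
            using xbnd[of "r^2" \<omega>] by (simp add: abs_le_square_iff[symmetric])
        qed simp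
      qed (simp_all add: apos)
      also have "\<dots> \<le> (C * real (r^2)) / a^2"
        using second_moment[where H=H and B=B and n="r^2" and k=k, OF HB] apos unfolding x_def C_def
        by (intro divide_right_mono) (simp_all add: mult_ac)
      also have "\<dots> = C * real (Suc j)^2 * inverse (real r ^ 2)"
        using False by (simp add: a_def field_simps power2_eq_square)
      finally show ?thesis .
    qed
    have summ: "summable (\<lambda>r. measure M (A r))"
    proof (rule summable_comparison_test)
      show "\<exists>N. \<forall>n\<ge>N. norm (measure M (A n)) \<le> C * real (Suc j)^2 * inverse (real n ^ 2)"
        using Ameas by auto
      show "summable (\<lambda>n. C * real (Suc j)^2 * inverse (real n ^ 2))"
        by (intro summable_mult inverse_power_summable) simp
    qed
    have "AE \<omega> in M. eventually (\<lambda>r. \<omega> \<in> space M - A r) sequentially"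
      by (rule borel_cantelli_AE1[OF Asets]) (simp_all add: summ less_top[symmetric])
    then show ?thesis
      by eventually_elim (auto elim!: eventually_mono simp: A_def not_less)
  qed
  have "AE \<omega> in M. \<forall>j::nat. eventually (\<lambda>r. \<bar>x (r^2) \<omega>\<bar> \<le> real (r^2) / real (Suc j)) sequentially"
    using ev by (subst AE_all_countable) auto
  then show ?thesis
  proof eventually_elim
    case (elim \<omega>)
    have "(\<lambda>n. x n \<omega> / real n) \<longlonglongrightarrow> 0"
    proof (rule det_slln[where B="2*B"])
      show "x 0 \<omega> = 0" by (simp add: x_def)
      show "\<bar>x (Suc n) \<omega> - x n \<omega>\<bar> \<le> 2 * B" for n
        by (simp add: x_def eH_bound HB)
    qed (use elim in auto)
    then show ?case by (simp add: x_def)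
  qed
qed

end

definition Pop :: "('q, 'a::finite) pfsa \<Rightarrow> ('q \<Rightarrow> real) \<Rightarrow> 'q \<Rightarrow> real" where
  "Pop G g q = (\<Sum>a\<in>UNIV. pitilde G q a * g (delta G q a))"

lemma word_prob_Cons_pos:
  assumes "is_pfsa G" "word_prob G q (a # w) > 0"
  shows "pitilde G q a > 0" "word_prob G (delta G q a) w > 0"
proof -
  have p: "pitilde G q a \<ge> 0" and w: "word_prob G (delta G q a) w \<ge> 0"
    using assms(1) word_prob_nonneg[OF assms(1)] by (auto simp: is_pfsa_def)
  have "pitilde G q a * word_prob G (delta G q a) w > 0" using assms(2) by simp
  then show "pitilde G q a > 0" "word_prob G (delta G q a) w > 0"
    using p w by (auto simp: zero_less_mult_iff)
qed

lemma closed_reach: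
  assumes "is_pfsa G" "q \<in> S" "\<And>q a. q \<in> S \<Longrightarrow> pitilde G q a > 0 \<Longrightarrow> delta G q a \<in> S"
    "word_prob G q w > 0"
  shows "delta_star G q w \<in> S"
  using assms(2,4)
proof (induction w arbitrary: q)
  case Nil then show ?case by simp
next
  case (Cons a w)
  from word_prob_Cons_pos[OF assms(1) Cons.prems(2)]
  have "pitilde G q a > 0" "word_prob G (delta G q a) w > 0" by auto
  with Cons assms(3) show ?case by simp
qed

lemma super_const:
  fixes g :: "'q::finite \<Rightarrow> real" and G :: "('q, 'a::finite) pfsa"
  assumes pf: "is_pfsa G" and sc: "strongly_connected G" and sup: "\<And>q. Pop G g q \<le> g q"
  shows "g q = g q'"
proof -
  define m where "m = Min (range g)"
  have mle: "m \<le> g p" for p unfolding m_def by simp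
  have "m \<in> range g" unfolding m_def by (rule Min_in) auto
  then obtain q0 where q0: "g q0 = m" by auto
  define S where "S = {p. g p = m}"
  have clos: "delta G p a \<in> S" if "p \<in> S" "pitilde G p a > 0" for p a
  proof (rule ccontr)
    assume "delta G p a \<notin> S"
    then have gt: "g (delta G p a) > m" using mle[of "delta G p a"] by (auto simp: S_def)
    have "Pop G g p - m = (\<Sum>b\<in>UNIV. pitilde G p b * (g (delta G p b) - m))"
      using pf by (simp add: Pop_def is_pfsa_def algebra_simps sum_subtractf sum_distrib_left[symmetric])
    also have "\<dots> \<ge> (\<Sum>b\<in>{a}. pitilde G p b * (g (delta G p b) - m))"
      using pf mle by (intro sum_mono2) (auto simp: is_pfsa_def)
    finally have "pitilde G p a * (g (delta G p a) - m) \<le> Pop G g p - m" by simp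
    moreover have "pitilde G p a * (g (delta G p a) - m) > 0" using that(2) gt by simp
    ultimately have "Pop G g p - m > 0" by linarith
    moreover have "Pop G g p \<le> m" using sup[of p] that(1) by (simp add: S_def)
    ultimately show False by simp
  qed
  have "p \<in> S" for p
  proof -
    obtain w where w: "word_prob G q0 w > 0" "delta_star G q0 w = p"
      using sc unfolding strongly_connected_def by blast
    have "delta_star G q0 w \<in> S" by (rule closed_reach[OF pf _ clos w(1)]) (simp add: S_def q0)
    then show ?thesis using w(2) by simp
  qed
  then show ?thesis by (simp add: S_def)
qed

lemma Pop_add: "Pop G (\<lambda>q. u q + v q) q = Pop G u q + Pop G v q"
  by (simp add: Pop_def distrib_left sum.distrib)

lemma Pop_scale: "Pop G (\<lambda>q. r * u q) q = r * Pop G u q"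
  by (simp add: Pop_def sum_distrib_left mult_ac)

lemma poisson:
  fixes f :: "'q::finite \<Rightarrow> real" and G :: "('q, 'a::finite) pfsa"
  assumes pf: "is_pfsa G" and sc: "strongly_connected G"
  shows "\<exists>g c. \<forall>q. f q = g q - Pop G g q + c"
proof -
  obtain q0 :: 'q where True by simp
  define cut where "cut h = (\<lambda>q. if q = q0 then 0 else h $ q)" for h :: "real^'q"
  define T where "T h = (\<chi> q. cut h q - Pop G (cut h) q + h $ q0)" for h :: "real^'q"
  have cut_add: "cut (x + y) = (\<lambda>q. cut x q + cut y q)" for x y by (auto simp: cut_def)
  have cut_scale: "cut (r *\<^sub>R x) = (\<lambda>q. r * cut x q)" for r x by (auto simp: cut_def)
  have lin: "linear T"
  proof (rule linearI)
    show "T (x + y) = T x + T y" for x y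
      unfolding vec_eq_iff by (simp add: T_def cut_add Pop_add)
    show "T (r *\<^sub>R x) = r *\<^sub>R T x" for r x
      unfolding vec_eq_iff by (simp add: T_def cut_scale Pop_scale algebra_simps)
  qed
  have inj: "inj T"
  proof (rule linear_inj_iff_eq_0[THEN iffD2, OF lin], intro allI impI)
    fix h assume T0: "T h = 0"
    define c where "c = h $ q0"
    have eq: "cut h q - Pop G (cut h) q = - c" for q
    proof -
      have "T h $ q = 0" using T0 by simp
      then have "cut h q - Pop G (cut h) q + c = 0" by (simp add: T_def c_def)
      then show ?thesis by linarith
    qed
    have const: "cut h q = cut h q'" for q q'
    proof (cases "c \<le> 0")
      case True
      show ?thesis
      proof (rule super_const[OF pf sc])
        fix q show "Pop G (cut h) q \<le> cut h q" using eq[of q] True by linarith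
      qed
    next
      case False
      have neg: "Pop G (\<lambda>q. - cut h q) q = - Pop G (cut h) q" for q
        by (simp add: Pop_def sum_negf)
      have "- cut h q = - cut h q'"
      proof (rule super_const[OF pf sc, where g="\<lambda>q. - cut h q"])
        fix q show "Pop G (\<lambda>q. - cut h q) q \<le> - cut h q" using eq[of q] False neg[of q] by linarith
      qed
      then show ?thesis by simp
    qed
    then have cz: "cut h q = 0" for q using const[of q q0] by (simp add: cut_def)
    then have "Pop G (cut h) q = 0" for q by (simp add: Pop_def)
    then have "c = 0" using eq[of q0] cz[of q0] by simp
    show "h = 0" unfolding vec_eq_iff
    proof
      fix i show "h $ i = 0 $ i" using cz[of i] \<open>c = 0\<close> by (cases "i = q0") (auto simp: cut_def c_def)
    qed
  qed
  have "surj T" by (rule linear_inj_imp_surj[OF lin inj])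
  then obtain h where h: "T h = (\<chi> q. f q)" by (metis surjD)
  show ?thesis
  proof (intro exI allI)
    fix q show "f q = cut h q - Pop G (cut h) q + h $ q0"
      using arg_cong[OF h, of "\<lambda>v. v $ q"] by (simp add: T_def)
  qed
qed


lemma occ_stake:
  assumes "y \<noteq> []"
  shows "occ_count (stake n \<omega>) y = card {i. i + length y \<le> n \<and> stake (length y) (sdrop i \<omega>) = y}"
proof -
  have "take (length y) (drop i (stake n \<omega>)) = stake (length y) (sdrop i \<omega>)" if "i + length y \<le> n" for i
    using that by (simp add: drop_stake take_stake min_absorb1)
  then show ?thesis unfolding occ_count_def by (intro arg_cong[where f=card]) auto
qed

lemma card_bool_sum: fixes n :: nat shows "(\<Sum>i<n. if P i then 1 else 0 :: real) = real (card {i. i < n \<and> P i})"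
proof (induction n)
  case 0 then show ?case by simp
next
  case (Suc n)
  have "{i. i < Suc n \<and> P i} = {i. i < n \<and> P i} \<union> (if P n then {n} else {})" by (auto simp: less_Suc_eq)
  moreover have "finite {i. i < n \<and> P i}" by simp
  ultimately show ?case using Suc by (auto simp: card_insert_if)
qed

lemma occ_sum_bound:
  assumes "y \<noteq> []"
  shows "0 \<le> (\<Sum>i<n. if stake (length y) (sdrop i \<omega>) = y then 1 else 0 :: real) - real (occ_count (stake n \<omega>) y)"
    and "(\<Sum>i<n. if stake (length y) (sdrop i \<omega>) = y then 1 else 0 :: real) - real (occ_count (stake n \<omega>) y) \<le> real (length y)"
proof -
  define P where "P i = (stake (length y) (sdrop i \<omega>) = y)" for i
  let ?k = "length y"
  have k1: "1 \<le> ?k" using assms(1) by (cases y) auto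
  have split: "{i. i < n \<and> P i} = {i. i + ?k \<le> n \<and> P i} \<union> {i. i < n \<and> n < i + ?k \<and> P i}"
    using k1 by auto
  have disj: "{i. i + ?k \<le> n \<and> P i} \<inter> {i. i < n \<and> n < i + ?k \<and> P i} = {}" by auto
  have fin1: "finite {i. i + ?k \<le> n \<and> P i}" by (rule finite_subset[of _ "{..n}"]) auto
  have fin2: "finite {i. i < n \<and> n < i + ?k \<and> P i}" by (rule finite_subset[of _ "{..n}"]) auto
  have cs: "card {i. i < n \<and> P i} = card {i. i + ?k \<le> n \<and> P i} + card {i. i < n \<and> n < i + ?k \<and> P i}"
    unfolding split by (rule card_Un_disjoint[OF fin1 fin2 disj])
  have occ: "occ_count (stake n \<omega>) y = card {i. i + ?k \<le> n \<and> P i}"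
    unfolding P_def by (rule occ_stake[OF assms(1)])
  have c2: "card {i. i < n \<and> n < i + ?k \<and> P i} \<le> ?k"
  proof -
    have "{i. i < n \<and> n < i + ?k \<and> P i} \<subseteq> {n + 1 - ?k..<n}" by auto
    then have "card {i. i < n \<and> n < i + ?k \<and> P i} \<le> card {n + 1 - ?k..<n}" by (intro card_mono) auto
    also have "\<dots> \<le> ?k" by simp
    finally show ?thesis .
  qed
  show "0 \<le> (\<Sum>i<n. if stake (length y) (sdrop i \<omega>) = y then 1 else 0 :: real) - real (occ_count (stake n \<omega>) y)"
    unfolding P_def[symmetric] card_bool_sum occ using cs by simp
  show "(\<Sum>i<n. if stake (length y) (sdrop i \<omega>) = y then 1 else 0 :: real) - real (occ_count (stake n \<omega>) y) \<le> real ?k"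
    unfolding P_def[symmetric] card_bool_sum occ using cs c2 by simp
qed

lemma Lw_1_sum: "(\<Sum>v\<in>Lw 1. F v) = (\<Sum>a\<in>UNIV. F [a :: 'a::finite] :: real)"
  using sum_Lw_Suc[of F 0] by (simp add: Lw_def)

locale sc_stream_law = stream_law G M for G :: "('q::finite, 'a::finite) pfsa" and M +
  assumes sc: "strongly_connected G"
begin

lemma qs_Suc: "qs (Suc i) \<omega> = delta_star G (qs i \<omega>) (stake 1 (sdrop i \<omega>))"
proof -
  have "stake (Suc i) \<omega> = stake i \<omega> @ stake 1 (sdrop i \<omega>)" using stake_add[of i \<omega> 1] by simp
  then show ?thesis by (simp add: qs_def delta_star_append)
qed

lemma freq_gc:
  fixes y :: "'a list" and g :: "'q \<Rightarrow> real"
  assumes yne: "y \<noteq> []" and gc0: "\<And>q. word_prob G q y = g q - Pop G g q + c"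
  shows "c \<ge> 0 \<and> (AE \<omega> in M. (\<lambda>n. real (occ_count (stake n \<omega>) y) / real n) \<longlonglongrightarrow> c)
            \<and> (c = 0 \<longrightarrow> (AE \<omega> in M. \<forall>n. occ_count (stake n \<omega>) y = 0))"
proof -
  let ?k = "length y"
  define f where "f q = word_prob G q y" for q
  have gc: "f q = g q - Pop G g q + c" for q using gc0 by (simp add: f_def)
  define H1 :: "'q \<Rightarrow> 'a list \<Rightarrow> real" where "H1 q v = (if v = y then 1 else 0 :: real)" for q v
  define H2 :: "'q \<Rightarrow> 'a list \<Rightarrow> real" where "H2 q v = g (delta_star G q v)" for q v
  define Bg where "Bg = Max (range (\<lambda>q. \<bar>g q\<bar>))"
  have gB: "\<bar>g q\<bar> \<le> Bg" for q unfolding Bg_def by (rule Max_ge) auto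
  have H1B: "\<bar>H1 q v\<bar> \<le> 1" for q v by (simp add: H1_def)
  have H2B: "\<bar>H2 q v\<bar> \<le> Bg" for q v by (simp add: H2_def gB)
  have PH1: "PH H1 ?k q = f q" for q
  proof -
    have "PH H1 ?k q = (\<Sum>v\<in>{y}. word_prob G q v)"
      unfolding PH_def H1_def by (intro sum.mono_neutral_cong_right) (auto simp: Lw_def finite_Lw[unfolded Lw_def])
    then show ?thesis by (simp add: f_def)
  qed
  have PH2: "PH H2 1 q = Pop G g q" for q
    unfolding PH_def H2_def Pop_def Lw_1_sum by simp
  have e1: "eH H1 ?k i \<omega> = (if stake ?k (sdrop i \<omega>) = y then 1 else 0) - f (qs i \<omega>)" for i \<omega>
    by (simp add: eH_def PH1 H1_def)
  have e2: "eH H2 1 i \<omega> = g (qs (Suc i) \<omega>) - Pop G g (qs i \<omega>)" for i \<omega>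
    by (simp add: eH_def PH2 PH2[simplified] H2_def qs_Suc)
  define Ocnt where "Ocnt n \<omega> = (\<Sum>i<n. if stake ?k (sdrop i \<omega>) = y then 1 else 0 :: real)" for n \<omega>
  have decomp: "Ocnt n \<omega> = (\<Sum>i<n. eH H1 ?k i \<omega>) + (\<Sum>i<n. eH H2 1 i \<omega>) + (g (qs 0 \<omega>) - g (qs n \<omega>)) + real n * c"
    for n \<omega>
  proof -
    have "(\<Sum>i<n. eH H2 1 i \<omega>) + (g (qs 0 \<omega>) - g (qs n \<omega>)) = (\<Sum>i<n. g (qs i \<omega>) - Pop G g (qs i \<omega>))"
    proof (induction n)
      case 0 then show ?case by simp
    next
      case (Suc n) then show ?case using e2[of n \<omega>] by (simp add: algebra_simps)
    qed
    also have "\<dots> = (\<Sum>i<n. f (qs i \<omega>) - c)" using gc by simp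
    finally have "(\<Sum>i<n. eH H2 1 i \<omega>) + (g (qs 0 \<omega>) - g (qs n \<omega>)) = (\<Sum>i<n. f (qs i \<omega>)) - real n * c"
      by (simp add: sum_subtractf)
    moreover have "(\<Sum>i<n. eH H1 ?k i \<omega>) = Ocnt n \<omega> - (\<Sum>i<n. f (qs i \<omega>))"
      by (simp add: e1 Ocnt_def sum_subtractf)
    ultimately show ?thesis by simp
  qed
  have lim1: "AE \<omega> in M. (\<lambda>n. (\<Sum>i<n. eH H1 ?k i \<omega>) / real n) \<longlonglongrightarrow> 0"
    by (rule slln_eH[OF H1B])
  have lim2: "AE \<omega> in M. (\<lambda>n. (\<Sum>i<n. eH H2 1 i \<omega>) / real n) \<longlonglongrightarrow> 0"
    by (rule slln_eH[OF H2B])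
  have bnd_lim: "(\<lambda>n. b n / real n) \<longlonglongrightarrow> 0" if "\<And>n. \<bar>b n\<bar> \<le> K" for b :: "nat \<Rightarrow> real" and K
  proof (rule Lim_null_comparison[where g="\<lambda>n. K / real n"])
    show "\<forall>\<^sub>F n in sequentially. norm (b n / real n) \<le> K / real n"
      using that by (auto intro!: always_eventually divide_right_mono simp: abs_divide)
    show "(\<lambda>n. K / real n) \<longlonglongrightarrow> 0" by (rule lim_const_over_n)
  qed
  have lim: "AE \<omega> in M. (\<lambda>n. real (occ_count (stake n \<omega>) y) / real n) \<longlonglongrightarrow> c"
    using lim1 lim2
  proof eventually_elim
    case (elim \<omega>)
    have l3: "(\<lambda>n. (g (qs 0 \<omega>) - g (qs n \<omega>)) / real n) \<longlonglongrightarrow> 0"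
    proof (rule bnd_lim[of _ "2*Bg"])
      fix n show "\<bar>g (qs 0 \<omega>) - g (qs n \<omega>)\<bar> \<le> 2 * Bg" using gB[of "qs 0 \<omega>"] gB[of "qs n \<omega>"] by linarith
    qed
    have l4: "(\<lambda>n. (Ocnt n \<omega> - real (occ_count (stake n \<omega>) y)) / real n) \<longlonglongrightarrow> 0"
    proof (rule bnd_lim[of _ "real ?k"])
      fix n show "\<bar>Ocnt n \<omega> - real (occ_count (stake n \<omega>) y)\<bar> \<le> real ?k"
        using occ_sum_bound[OF yne, where \<omega>=\<omega> and n=n] unfolding Ocnt_def by linarith
    qed
    have l5: "(\<lambda>n. real n * c / real n) \<longlonglongrightarrow> c"
    proof (rule Lim_transform_eventually[OF tendsto_const])
      show "\<forall>\<^sub>F n in sequentially. c = real n * c / real n"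
        using eventually_gt_at_top[of "0::nat"] by eventually_elim simp
    qed
    have "(\<lambda>n. (\<Sum>i<n. eH H1 ?k i \<omega>) / real n + (\<Sum>i<n. eH H2 1 i \<omega>) / real n
           + (g (qs 0 \<omega>) - g (qs n \<omega>)) / real n + real n * c / real n
           - (Ocnt n \<omega> - real (occ_count (stake n \<omega>) y)) / real n) \<longlonglongrightarrow> 0 + 0 + 0 + c - 0"
      by (intro tendsto_intros elim l3 l4 l5)
    moreover have "(\<Sum>i<n. eH H1 ?k i \<omega>) / real n + (\<Sum>i<n. eH H2 1 i \<omega>) / real n
           + (g (qs 0 \<omega>) - g (qs n \<omega>)) / real n + real n * c / real n
           - (Ocnt n \<omega> - real (occ_count (stake n \<omega>) y)) / real n = real (occ_count (stake n \<omega>) y) / real n" for n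
      unfolding decomp[of n \<omega>] by (simp add: add_divide_distrib diff_divide_distrib)
    ultimately show ?case by simp
  qed
  have c0: "c \<ge> 0"
  proof -
    have "AE \<omega> in M. c \<ge> 0"
      using lim
    proof eventually_elim
      case (elim \<omega>)
      show ?case by (rule LIMSEQ_le_const[OF elim]) auto
    qed
    then show ?thesis by simp
  qed
  have zero: "AE \<omega> in M. \<forall>n. occ_count (stake n \<omega>) y = 0" if "c = 0"
  proof -
    have "Pop G g q \<le> g q" for q using gc[of q] that word_prob_nonneg[OF pfsa, of q y] by (simp add: f_def)
    then have gconst: "g q = g q'" for q q' using super_const[OF pfsa sc] by blast
    have f0: "f q = 0" for q
    proof -
      have "Pop G g q = (\<Sum>a\<in>UNIV. pitilde G q a * g q)"
        unfolding Pop_def using gconst[of _ q] by (intro sum.cong) auto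
      also have "\<dots> = g q" using pfsa by (simp add: is_pfsa_def sum_distrib_right[symmetric])
      finally have "Pop G g q = g q" .
      then show ?thesis using gc[of q] that by simp
    qed
    have oi: "AE \<omega> in M. stake ?k (sdrop i \<omega>) \<noteq> y" for i
    proof -
      define Z where "Z w = (if drop i w = y then 1 else 0 :: real)" for w
      have "(\<integral>\<omega>. Z (stake (i + ?k) \<omega>) \<partial>M) = (\<Sum>w\<in>Lw (i + ?k). word_prob G (init G) w * Z w)"
        by (rule integral_stake)
      also have "\<dots> = (\<Sum>u\<in>Lw i. \<Sum>v\<in>Lw ?k. word_prob G (init G) (u @ v) * Z (u @ v))"
        by (rule sum_Lw_append)
      also have "\<dots> = (\<Sum>u\<in>(Lw i :: 'a list set). 0)"
      proof (rule sum.cong[OF refl])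
        fix u :: "'a list" assume "u \<in> Lw i"
        then have lu: "length u = i" by (simp add: Lw_def)
        have "(\<Sum>v\<in>Lw ?k. word_prob G (init G) (u @ v) * Z (u @ v)) = (\<Sum>v\<in>{y}. word_prob G (init G) (u @ v))"
          unfolding Z_def using lu by (intro sum.mono_neutral_cong_right) (auto simp: Lw_def finite_Lw[unfolded Lw_def])
        also have "\<dots> = 0" using f0 by (simp add: word_prob_append f_def)
        finally show "(\<Sum>v\<in>Lw ?k. word_prob G (init G) (u @ v) * Z (u @ v)) = 0" .
      qed
      finally have int0: "(\<integral>\<omega>. Z (stake (i + ?k) \<omega>) \<partial>M) = 0" by simp
      have "AE \<omega> in M. Z (stake (i + ?k) \<omega>) = 0"
      proof (rule integral_nonneg_eq_0_iff_AE[THEN iffD1, OF _ _ int0])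
        show "integrable M (\<lambda>\<omega>. Z (stake (i + ?k) \<omega>))" by simp
      qed (auto simp: Z_def)
      then show ?thesis
        by eventually_elim (simp add: Z_def drop_stake split: if_splits)
    qed
    have "AE \<omega> in M. \<forall>i. stake ?k (sdrop i \<omega>) \<noteq> y" using oi by (subst AE_all_countable) auto
    then show ?thesis
    proof eventually_elim
      case (elim \<omega>)
      show ?case unfolding occ_stake[OF yne] using elim by auto
    qed
  qed
  show ?thesis using c0 lim zero by blast
qed

lemma freq:
  fixes y :: "'a list"
  assumes yne: "y \<noteq> []"
  shows "\<exists>c. c \<ge> 0 \<and> (AE \<omega> in M. (\<lambda>n. real (occ_count (stake n \<omega>) y) / real n) \<longlonglongrightarrow> c)
            \<and> (c = 0 \<longrightarrow> (AE \<omega> in M. \<forall>n. occ_count (stake n \<omega>) y = 0))"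
proof -
  obtain g c where "\<And>q. word_prob G q y = g q - Pop G g q + c"
    using poisson[OF pfsa sc, of "\<lambda>q. word_prob G q y"] by blast
  from freq_gc[OF yne this] show ?thesis by blast
qed

end

context stream_law begin

lemma sd_conv_gen:
  fixes cf :: "'a list \<Rightarrow> real"
  assumes hc: "\<And>y. y \<noteq> [] \<Longrightarrow> cf y \<ge> 0 \<and> (AE \<omega> in M. (\<lambda>n. real (occ_count (stake n \<omega>) y) / real n) \<longlonglongrightarrow> cf y)
            \<and> (cf y = 0 \<longrightarrow> (AE \<omega> in M. \<forall>n. occ_count (stake n \<omega>) y = 0))"
  shows "AE \<omega> in M. \<forall>x \<sigma>. (\<lambda>n. sym_deriv (stake n \<omega>) x \<sigma>) \<longlonglongrightarrow> cf (x@[\<sigma>]) / (\<Sum>\<tau>\<in>UNIV. cf (x@[\<tau>]))"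
proof -
  have "AE \<omega> in M. \<forall>\<sigma>. (\<lambda>n. sym_deriv (stake n \<omega>) x \<sigma>) \<longlonglongrightarrow> cf (x@[\<sigma>]) / (\<Sum>\<tau>\<in>UNIV. cf (x@[\<tau>]))" for x
  proof -
    define D where "D = (\<Sum>\<tau>\<in>UNIV. cf (x@[\<tau>]))"
    have nn: "cf (x@[\<tau>]) \<ge> 0" for \<tau> using hc[of "x@[\<tau>]"] by simp
    show ?thesis
    proof (cases "D = 0")
      case True
      then have z: "cf (x@[\<tau>]) = 0" for \<tau> using nn unfolding D_def
        by (subst (asm) sum_nonneg_eq_0_iff) auto
      have "AE \<omega> in M. \<forall>n. occ_count (stake n \<omega>) (x@[\<tau>]) = 0" for \<tau> using hc[of "x@[\<tau>]"] z by simp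
      then have "AE \<omega> in M. \<forall>\<tau> n. occ_count (stake n \<omega>) (x@[\<tau>]) = 0" by (subst AE_all_countable) auto
      then show ?thesis
      proof eventually_elim
        case (elim \<omega>)
        then show ?case by (simp add: sym_deriv_def z)
      qed
    next
      case False
      have "AE \<omega> in M. (\<lambda>n. real (occ_count (stake n \<omega>) (x@[\<tau>])) / real n) \<longlonglongrightarrow> cf (x@[\<tau>])" for \<tau>
        using hc[of "x@[\<tau>]"] by simp
      then have "AE \<omega> in M. \<forall>\<tau>. (\<lambda>n. real (occ_count (stake n \<omega>) (x@[\<tau>])) / real n) \<longlonglongrightarrow> cf (x@[\<tau>])"
        by (subst AE_all_countable) auto
      then show ?thesis
      proof eventually_elim
        case (elim \<omega>)
        show ?case
        proof
          fix \<sigma>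
          have lim: "(\<lambda>n. (real (occ_count (stake n \<omega>) (x@[\<sigma>])) / real n) /
                  (\<Sum>\<tau>\<in>UNIV. real (occ_count (stake n \<omega>) (x@[\<tau>])) / real n)) \<longlonglongrightarrow> cf (x@[\<sigma>]) / D"
            unfolding D_def using elim False unfolding D_def by (intro tendsto_intros) auto
          show "(\<lambda>n. sym_deriv (stake n \<omega>) x \<sigma>) \<longlonglongrightarrow> cf (x@[\<sigma>]) / (\<Sum>\<tau>\<in>UNIV. cf (x@[\<tau>]))"
            unfolding D_def[symmetric]
          proof (rule Lim_transform_eventually[OF lim])
            show "\<forall>\<^sub>F n in sequentially. real (occ_count (stake n \<omega>) (x@[\<sigma>])) / real n /
                  (\<Sum>\<tau>\<in>UNIV. real (occ_count (stake n \<omega>) (x@[\<tau>])) / real n) = sym_deriv (stake n \<omega>) x \<sigma>"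
              using eventually_gt_at_top[of "0::nat"]
              by eventually_elim (simp add: sym_deriv_def sum_divide_distrib[symmetric])
          qed
        qed
      qed
    qed
  qed
  then show ?thesis by (subst AE_all_countable) auto
qed

end

context sc_stream_law begin

lemma sd_conv_G:
  "\<exists>phi. (\<forall>x \<sigma>. 0 \<le> phi x \<sigma> \<and> phi x \<sigma> \<le> 1) \<and>
     (AE \<omega> in M. \<forall>x \<sigma>. (\<lambda>n. sym_deriv (stake n \<omega>) x \<sigma>) \<longlonglongrightarrow> phi x \<sigma>)"
proof -
  define P where "P y c \<longleftrightarrow> c \<ge> 0 \<and> (AE \<omega> in M. (\<lambda>n. real (occ_count (stake n \<omega>) y) / real n) \<longlonglongrightarrow> c)
            \<and> (c = 0 \<longrightarrow> (AE \<omega> in M. \<forall>n. occ_count (stake n \<omega>) y = 0))" for y c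
  define cf where "cf y = (SOME c. P y c)" for y
  have hc: "P y (cf y)" if "y \<noteq> []" for y
    unfolding cf_def by (rule someI_ex) (use freq[OF that] in \<open>simp add: P_def\<close>)
  define phi where "phi x \<sigma> = cf (x@[\<sigma>]) / (\<Sum>\<tau>\<in>UNIV. cf (x@[\<tau>]))" for x \<sigma>
  have nn: "cf (x@[\<tau>]) \<ge> 0" for x \<tau> using hc[of "x@[\<tau>]"] by (simp add: P_def)
  show ?thesis
  proof (intro exI conjI allI)
    fix x \<sigma>
    show "0 \<le> phi x \<sigma>" unfolding phi_def using nn by (simp add: sum_nonneg)
    have "cf (x@[\<sigma>]) \<le> (\<Sum>\<tau>\<in>UNIV. cf (x@[\<tau>]))"
      using nn by (intro member_le_sum) auto
    then show "phi x \<sigma> \<le> 1" unfolding phi_def using nn[of x \<sigma>]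
      by (cases "(\<Sum>\<tau>\<in>UNIV. cf (x@[\<tau>])) = 0") (auto simp: divide_le_eq_1)
  next
    show "AE \<omega> in M. \<forall>x \<sigma>. (\<lambda>n. sym_deriv (stake n \<omega>) x \<sigma>) \<longlonglongrightarrow> phi x \<sigma>"
      unfolding phi_def by (rule sd_conv_gen) (use hc in \<open>simp add: P_def\<close>)
  qed
qed

end

lemma W_pfsa: "is_pfsa (W :: (unit, 'a::finite) pfsa)"
  by (simp add: is_pfsa_def W_def)

lemma W_sc: "strongly_connected (W :: (unit, 'a::finite) pfsa)"
  unfolding strongly_connected_def by (intro allI exI[of _ "[]"]) simp

lemma W_word_prob: "word_prob (W :: (unit, 'a::finite) pfsa) q y = (1 / real CARD('a)) ^ length y"
  by (induction y arbitrary: q) (simp_all add: W_def)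

lemma sd_conv_W:
  assumes "is_stream_law (W :: (unit, 'a::finite) pfsa) MW"
  shows "AE \<omega> in MW. \<forall>x \<sigma>. (\<lambda>n. sym_deriv (stake n \<omega>) x \<sigma>) \<longlonglongrightarrow> unif \<sigma>"
proof -
  interpret sc_stream_law W MW
    by unfold_locales (use assms W_pfsa W_sc in auto)
  define cf :: "'a list \<Rightarrow> real" where "cf y = (1 / real CARD('a)) ^ length y" for y
  have hc: "cf y \<ge> 0 \<and> (AE \<omega> in MW. (\<lambda>n. real (occ_count (stake n \<omega>) y) / real n) \<longlonglongrightarrow> cf y)
            \<and> (cf y = 0 \<longrightarrow> (AE \<omega> in MW. \<forall>n. occ_count (stake n \<omega>) y = 0))" if "y \<noteq> []" for y
    by (rule freq_gc[OF that, where g="\<lambda>_. 0"]) (simp add: W_word_prob Pop_def cf_def)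
  have "AE \<omega> in MW. \<forall>x \<sigma>. (\<lambda>n. sym_deriv (stake n \<omega>) x \<sigma>) \<longlonglongrightarrow> cf (x@[\<sigma>]) / (\<Sum>\<tau>\<in>UNIV. cf (x@[\<tau>]))"
    by (rule sd_conv_gen) (use hc in auto)
  moreover have "cf (x@[\<sigma>]) / (\<Sum>\<tau>\<in>UNIV. cf (x@[\<tau>])) = unif \<sigma>" for x \<sigma>
    by (simp add: cf_def unif_def)
  ultimately show ?thesis by simp
qed


lemma sup_norm_le: "(\<And>\<sigma>. \<bar>f \<sigma>\<bar> \<le> B) \<Longrightarrow> sup_norm (f :: 'a::finite \<Rightarrow> real) \<le> B"
  unfolding sup_norm_def by (subst Max_le_iff) auto

lemma sup_norm_ge: "\<bar>f \<sigma>\<bar> \<le> sup_norm (f :: 'a::finite \<Rightarrow> real)"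
  unfolding sup_norm_def by (rule Max_ge) auto

lemma sup_norm_nonneg: "0 \<le> sup_norm (f :: 'a::finite \<Rightarrow> real)"
  using sup_norm_ge[of f undefined] by linarith

lemma sup_norm_diff: "\<bar>sup_norm f - sup_norm g\<bar> \<le> (\<Sum>\<sigma>\<in>UNIV. \<bar>f \<sigma> - g \<sigma>\<bar>)"
  for f g :: "'a::finite \<Rightarrow> real"
proof -
  have *: "sup_norm f \<le> sup_norm g + (\<Sum>\<sigma>\<in>UNIV. \<bar>f \<sigma> - g \<sigma>\<bar>)" for f g :: "'a \<Rightarrow> real"
  proof (rule sup_norm_le)
    fix \<sigma>
    have "\<bar>f \<sigma> - g \<sigma>\<bar> \<le> (\<Sum>\<sigma>\<in>UNIV. \<bar>f \<sigma> - g \<sigma>\<bar>)" by (rule member_le_sum) auto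
    then show "\<bar>f \<sigma>\<bar> \<le> sup_norm g + (\<Sum>\<sigma>\<in>UNIV. \<bar>f \<sigma> - g \<sigma>\<bar>)"
      using sup_norm_ge[of g \<sigma>] by linarith
  qed
  have "(\<Sum>\<sigma>\<in>UNIV. \<bar>g \<sigma> - f \<sigma>\<bar>) = (\<Sum>\<sigma>\<in>UNIV. \<bar>f \<sigma> - g \<sigma>\<bar>)" by (simp add: abs_minus_commute)
  then show ?thesis using *[of f g] *[of g f] by linarith
qed

lemma tendsto_sup_norm:
  fixes a :: "'i \<Rightarrow> 'a::finite \<Rightarrow> real"
  assumes "\<And>\<sigma>. ((\<lambda>i. a i \<sigma>) \<longlongrightarrow> l \<sigma>) F"
  shows "((\<lambda>i. sup_norm (a i)) \<longlongrightarrow> sup_norm l) F"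
proof -
  have "((\<lambda>i. \<Sum>\<sigma>\<in>UNIV. \<bar>a i \<sigma> - l \<sigma>\<bar>) \<longlongrightarrow> (\<Sum>\<sigma>\<in>UNIV. \<bar>l \<sigma> - l \<sigma>\<bar>)) F"
    by (intro tendsto_intros assms)
  then have z: "((\<lambda>i. \<Sum>\<sigma>\<in>UNIV. \<bar>a i \<sigma> - l \<sigma>\<bar>) \<longlongrightarrow> 0) F" by simp
  have "((\<lambda>i. sup_norm (a i) - sup_norm l) \<longlongrightarrow> 0) F"
  proof (rule Lim_null_comparison[OF _ z])
    show "\<forall>\<^sub>F i in F. norm (sup_norm (a i) - sup_norm l) \<le> (\<Sum>\<sigma>\<in>UNIV. \<bar>a i \<sigma> - l \<sigma>\<bar>)"
      by (intro always_eventually allI) (simp add: sup_norm_diff)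
  qed
  then show ?thesis by (simp add: Lim_null[symmetric])
qed

lemma tannery_infsum:
  fixes h :: "'i \<Rightarrow> 'x \<Rightarrow> real" and b :: "'x \<Rightarrow> real"
  assumes hb: "\<And>i x. \<bar>h i x\<bar> \<le> b x" and bs: "b summable_on UNIV"
    and lim: "\<And>x. ((\<lambda>i. h i x) \<longlongrightarrow> 0) F"
  shows "((\<lambda>i. infsum (h i) UNIV) \<longlongrightarrow> 0) F"
proof (rule tendstoI)
  fix e :: real assume e: "0 < e"
  have b0: "0 \<le> b x" for x using hb[of undefined x] by linarith
  have "\<forall>\<^sub>F S in finite_subsets_at_top UNIV. dist (sum b S) (infsum b UNIV) < e / 2"
    using infsum_tendsto[OF bs] e unfolding tendsto_iff by (metis half_gt_zero)
  then obtain S where S: "finite S" "dist (sum b S) (infsum b UNIV) < e / 2"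
    unfolding eventually_finite_subsets_at_top by auto
  have bsS: "b summable_on (UNIV - S)" by (rule summable_on_subset_banach[OF bs]) auto
  have "infsum b UNIV = infsum b (S \<union> (UNIV - S))" by simp
  also have "\<dots> = infsum b S + infsum b (UNIV - S)"
    by (rule infsum_Un_disjoint) (use S bsS in auto)
  finally have tail: "infsum b (UNIV - S) < e / 2" using S by (simp add: dist_real_def)
  have hsum: "h i summable_on A" for i A
  proof -
    have "(\<lambda>x. norm (h i x)) summable_on UNIV"
      by (rule Infinite_Sum.abs_summable_on_comparison_test'[OF bs]) (use hb in auto)
    then have "h i summable_on UNIV" by (rule summable_on_iff_abs_summable_on_real[THEN iffD2])
    then show ?thesis by (rule summable_on_subset_banach) auto
  qed
  have habs: "(\<lambda>x. \<bar>h i x\<bar>) summable_on A" for i A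
  proof -
    have "(\<lambda>x. norm (h i x)) summable_on UNIV"
      by (rule Infinite_Sum.abs_summable_on_comparison_test'[OF bs]) (use hb in auto)
    then have "(\<lambda>x. \<bar>h i x\<bar>) summable_on UNIV" unfolding real_norm_def .
    then show ?thesis by (rule summable_on_subset_banach) auto
  qed
  have "((\<lambda>i. \<Sum>x\<in>S. \<bar>h i x\<bar>) \<longlongrightarrow> (\<Sum>x\<in>S. \<bar>0\<bar>)) F"
    by (intro tendsto_intros lim)
  then have "\<forall>\<^sub>F i in F. (\<Sum>x\<in>S. \<bar>h i x\<bar>) < e / 2"
    using e unfolding order_tendsto_iff by (simp del: divide_const_simps)
  then show "\<forall>\<^sub>F i in F. dist (infsum (h i) UNIV) 0 < e"
  proof eventually_elim
    case (elim i)
    have "infsum (h i) UNIV = infsum (h i) (S \<union> (UNIV - S))" by simp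
    also have "\<dots> = infsum (h i) S + infsum (h i) (UNIV - S)"
      by (rule infsum_Un_disjoint) (use hsum in auto)
    finally have eq: "infsum (h i) UNIV = sum (h i) S + infsum (h i) (UNIV - S)" using S by simp
    have "\<bar>sum (h i) S\<bar> \<le> (\<Sum>x\<in>S. \<bar>h i x\<bar>)" by (rule sum_abs)
    moreover have "\<bar>infsum (h i) (UNIV - S)\<bar> \<le> infsum b (UNIV - S)"
    proof -
      have "\<bar>infsum (h i) (UNIV - S)\<bar> \<le> infsum (\<lambda>x. \<bar>h i x\<bar>) (UNIV - S)"
        using norm_infsum_bound[of "h i" "UNIV - S"] habs[of i "UNIV - S"] by simp
      also have "\<dots> \<le> infsum b (UNIV - S)"
        by (rule infsum_mono[OF habs bsS]) (use hb in auto)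
      finally show ?thesis .
    qed
    ultimately show ?case using elim tail abs_triangle_ineq[of "sum (h i) S" "infsum (h i) (UNIV - S)"]
      unfolding dist_real_def eq by linarith
  qed
qed


lemma card_Lw: "card (Lw k :: ('a::finite) list set) = CARD('a) ^ k"
  using card_lists_length_eq[of "UNIV :: 'a set" k] by (simp add: Lw_def)

lemma sum_Lw_weight:
  "(\<Sum>x\<in>(Lw k :: ('a::finite) list set). 1 / real CARD('a) ^ (2 * length x)) = (1 / real CARD('a)) ^ k"
proof -
  have "(\<Sum>x\<in>(Lw k :: 'a list set). 1 / real CARD('a) ^ (2 * length x))
       = real (CARD('a) ^ k) * (1 / real CARD('a) ^ (2 * k))"
    by (simp add: Lw_def card_Lw[unfolded Lw_def])
  also have "\<dots> = (1 / real CARD('a)) ^ k"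
  proof -
    have e: "real CARD('a) ^ (2 * k) = real CARD('a) ^ k * real CARD('a) ^ k"
      by (simp add: mult_2 power_add)
    have p: "real CARD('a) ^ k > 0" by simp
    show ?thesis unfolding e of_nat_power power_one_over using p by (simp add: divide_simps)
  qed
  finally show ?thesis .
qed

lemma weight_sum_bound:
  fixes F :: "('a::finite) list set"
  assumes N2: "2 \<le> CARD('a)" and fin: "finite F" and FK: "\<And>x. x \<in> F \<Longrightarrow> K \<le> length x"
  shows "(\<Sum>x\<in>F. 1 / real CARD('a) ^ (2 * length x)) \<le> (1 / real CARD('a)) ^ K * (real CARD('a) / (real CARD('a) - 1))"
proof -
  define N where "N = real CARD('a)"
  have N2': "2 \<le> N" using N2 unfolding N_def by simp
  define L where "L = Max (insert K (length ` F))"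
  have FL: "length x \<le> L" if "x \<in> F" for x unfolding L_def using fin that by (intro Max_ge) auto
  define A where "A k = (Lw k :: 'a list set)" for k
  have "(\<Sum>x\<in>F. 1 / N ^ (2 * length x)) \<le> (\<Sum>x\<in>(\<Union>k\<in>{K..L}. A k). 1 / N ^ (2 * length x))"
  proof (rule sum_mono2)
    show "finite (\<Union>k\<in>{K..L}. A k)" by (simp add: A_def)
    show "F \<subseteq> (\<Union>k\<in>{K..L}. A k)" using FK FL by (auto simp: A_def Lw_def)
  qed simp
  also have "\<dots> = (\<Sum>k\<in>{K..L}. \<Sum>x\<in>A k. 1 / N ^ (2 * length x))"
    by (rule sum.UNION_disjoint) (auto simp: A_def Lw_def finite_Lw[unfolded Lw_def])
  also have "\<dots> = (\<Sum>k\<in>{K..L}. (1 / N) ^ k)"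
    unfolding A_def N_def by (simp add: sum_Lw_weight)
  also have "\<dots> \<le> (1 / N) ^ K * (N / (N - 1))"
  proof -
    have r1: "1 / N \<noteq> 1" using N2' by simp
    have "K \<le> L" unfolding L_def using fin by (intro Max_ge) auto
    then have "(\<Sum>k\<in>{K..L}. (1 / N) ^ k) = ((1/N)^K - (1/N)^Suc L) / (1 - 1/N)"
      using r1 by (simp add: sum_gp)
    also have "\<dots> \<le> (1/N)^K / (1 - 1/N)"
      using N2' by (intro divide_right_mono) auto
    also have "\<dots> = (1 / N) ^ K * (N / (N - 1))"
      using N2' by (simp add: field_simps)
    finally show ?thesis .
  qed
  finally show ?thesis by (simp add: N_def)
qed

lemma weight_summable:
  assumes N2: "2 \<le> CARD('a::finite)"
  shows "(\<lambda>x::'a list. 1 / real CARD('a) ^ (2 * length x)) summable_on A"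
proof (rule nonneg_bdd_above_summable_on)
  show "bdd_above (sum (\<lambda>x::'a list. 1 / real CARD('a) ^ (2 * length x)) ` {F. F \<subseteq> A \<and> finite F})"
    using weight_sum_bound[OF N2, where K=0] by (intro bdd_aboveI) auto
qed simp


definition MWu :: "'a::finite stream measure" where
  "MWu = stream_space (measure_pmf (pmf_of_set (UNIV :: 'a set)))"

lemma MWu_cyl:
  "emeasure (MWu :: 'a::finite stream measure) {\<omega> \<in> space MWu. stake (length w) \<omega> = w}
     = ennreal ((1 / real CARD('a)) ^ length w)"
proof (induction w)
  case Nil
  interpret prob_space "MWu :: 'a stream measure"
    unfolding MWu_def by (rule prob_space.prob_space_stream_space) (rule prob_space_measure_pmf)
  show ?case by (simp add: emeasure_space_1)
next
  case (Cons a w)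
  let ?p = "pmf_of_set (UNIV :: 'a set)"
  interpret P: prob_space "measure_pmf ?p" by (rule prob_space_measure_pmf)
  have sp: "space (MWu :: 'a stream measure) = UNIV"
    by (simp add: MWu_def space_stream_space)
  have meas: "{\<omega> \<in> space MWu. stake n \<omega> = v} \<in> sets (MWu :: 'a stream measure)" for n v
  proof -
    have "stake n \<in> measurable (MWu :: 'a stream measure) (count_space UNIV)"
      unfolding MWu_def
      by (subst measurable_cong_sets[OF sets_stream_space_cong[OF sets_measure_pmf_count_space] refl])
         (rule measurable_stake)
    from measurable_sets[OF this, of "{v}"] show ?thesis
      by (simp add: vimage_def Int_def conj_commute)
  qed
  have "emeasure (MWu :: 'a stream measure) {\<omega> \<in> space MWu. stake (length (a # w)) \<omega> = a # w}
      = (\<integral>\<^sup>+t. emeasure MWu {x \<in> space MWu. t ## x \<in> {\<omega> \<in> space MWu. stake (length (a # w)) \<omega> = a # w}} \<partial>measure_pmf ?p)"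
    unfolding MWu_def by (rule prob_space.emeasure_stream_space[OF prob_space_measure_pmf]) (use meas in \<open>simp add: MWu_def\<close>)
  also have "\<dots> = (\<integral>\<^sup>+t. emeasure MWu {\<omega> \<in> space MWu. stake (length w) \<omega> = w} * indicator {a} t \<partial>measure_pmf ?p)"
    by (intro nn_integral_cong) (auto simp: sp indicator_def)
  also have "\<dots> = emeasure MWu {\<omega> \<in> space MWu. stake (length w) \<omega> = w} * emeasure (measure_pmf ?p) {a}"
    by (rule nn_integral_cmult_indicator) simp
  also have "\<dots> = ennreal ((1 / real CARD('a)) ^ length (a # w))"
    using Cons by (simp add: emeasure_pmf_single ennreal_mult' [symmetric] mult.commute)
  finally show ?case .
qed

lemma MWu_law: "is_stream_law (W :: (unit, 'a::finite) pfsa) (MWu :: 'a stream measure)"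
  unfolding is_stream_law_def
proof (intro conjI allI)
  show "prob_space (MWu :: 'a stream measure)"
    unfolding MWu_def by (rule prob_space.prob_space_stream_space) (rule prob_space_measure_pmf)
  show "sets (MWu :: 'a stream measure) = sets (stream_space (count_space UNIV))"
    unfolding MWu_def by (rule sets_stream_space_cong[OF sets_measure_pmf_count_space])
  fix w :: "'a list"
  show "emeasure MWu {\<omega> \<in> space MWu. stake (length w) \<omega> = w} = ennreal (word_prob W (init W) w)"
    by (simp add: MWu_cyl W_word_prob)
qed


definition cfG :: "('q::finite, 'a::finite) pfsa \<Rightarrow> 'a list \<Rightarrow> real" where
  "cfG G y = (SOME c. \<exists>g. \<forall>q. word_prob G q y = g q - Pop G g q + c)"

definition phiG :: "('q::finite, 'a::finite) pfsa \<Rightarrow> 'a list \<Rightarrow> 'a \<Rightarrow> real" where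
  "phiG G x \<sigma> = cfG G (x@[\<sigma>]) / (\<Sum>\<tau>\<in>UNIV. cfG G (x@[\<tau>]))"

lemma sym_deriv_bnd: "0 \<le> sym_deriv s x \<sigma> \<and> sym_deriv s x \<sigma> \<le> 1"
proof -
  have "real (occ_count s (x @ [\<sigma>])) \<le> (\<Sum>\<tau>\<in>UNIV. real (occ_count s (x @ [\<tau>])))"
    by (rule member_le_sum) auto
  then show ?thesis unfolding sym_deriv_def
    by (cases "(\<Sum>\<tau>\<in>UNIV. real (occ_count s (x @ [\<tau>]))) = 0") (auto simp: divide_le_eq_1 sum_nonneg)
qed

context sc_stream_law begin

lemma cfG_prop: "y \<noteq> [] \<Longrightarrow> cfG G y \<ge> 0 \<and> (AE \<omega> in M. (\<lambda>n. real (occ_count (stake n \<omega>) y) / real n) \<longlonglongrightarrow> cfG G y)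
            \<and> (cfG G y = 0 \<longrightarrow> (AE \<omega> in M. \<forall>n. occ_count (stake n \<omega>) y = 0))"
proof -
  assume yne: "y \<noteq> []"
  have "\<exists>c g. \<forall>q. word_prob G q y = g q - Pop G g q + c"
    using poisson[OF pfsa sc, of "\<lambda>q. word_prob G q y"] by blast
  then have "\<exists>g. \<forall>q. word_prob G q y = g q - Pop G g q + cfG G y"
    unfolding cfG_def by (rule someI_ex)
  then obtain g where "\<And>q. word_prob G q y = g q - Pop G g q + cfG G y" by blast
  from freq_gc[OF yne this] show ?thesis .
qed

lemma phiG_conv: "AE \<omega> in M. \<forall>x \<sigma>. (\<lambda>n. sym_deriv (stake n \<omega>) x \<sigma>) \<longlonglongrightarrow> phiG G x \<sigma>"
  unfolding phiG_def by (rule sd_conv_gen) (use cfG_prop in auto)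

lemma phiG_bnd: "0 \<le> phiG G x \<sigma> \<and> phiG G x \<sigma> \<le> 1"
proof -
  have nn: "cfG G (x@[\<tau>]) \<ge> 0" for \<tau> using cfG_prop[of "x@[\<tau>]"] by simp
  have "cfG G (x@[\<sigma>]) \<le> (\<Sum>\<tau>\<in>UNIV. cfG G (x@[\<tau>]))"
    using nn by (intro member_le_sum) auto
  moreover have "0 \<le> (\<Sum>\<tau>\<in>UNIV. cfG G (x@[\<tau>]))" by (rule sum_nonneg) (use nn in auto)
  ultimately show ?thesis unfolding phiG_def using nn[of \<sigma>]
    by (cases "(\<Sum>\<tau>\<in>UNIV. cfG G (x@[\<tau>])) = 0") (auto simp: divide_le_eq_1)
qed

end

lemma AE_pair_both:
  assumes "prob_space M1" "prob_space M2" "AE x in M1. P x" "AE y in M2. Q y"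
  shows "AE z in M1 \<Otimes>\<^sub>M M2. P (fst z) \<and> Q (snd z)"
proof -
  interpret pair_sigma_finite M1 M2
    by (intro pair_sigma_finite.intro prob_space_imp_sigma_finite assms)
  interpret M1: prob_space M1 by fact
  interpret M2: prob_space M2 by fact
  obtain N1 where N1: "N1 \<in> sets M1" "emeasure M1 N1 = 0" "{x\<in>space M1. \<not> P x} \<subseteq> N1"
    using assms(3) unfolding eventually_ae_filter by auto
  obtain N2 where N2: "N2 \<in> sets M2" "emeasure M2 N2 = 0" "{x\<in>space M2. \<not> Q x} \<subseteq> N2"
    using assms(4) unfolding eventually_ae_filter by auto
  show ?thesis
  proof (rule AE_I)
    show "{z \<in> space (M1 \<Otimes>\<^sub>M M2). \<not> (P (fst z) \<and> Q (snd z))} \<subseteq> N1 \<times> space M2 \<union> space M1 \<times> N2"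
      using N1 N2 by (auto simp: space_pair_measure)
    show "N1 \<times> space M2 \<union> space M1 \<times> N2 \<in> sets (M1 \<Otimes>\<^sub>M M2)"
      using N1 N2 by auto
    have "emeasure (M1 \<Otimes>\<^sub>M M2) (N1 \<times> space M2 \<union> space M1 \<times> N2)
        \<le> emeasure (M1 \<Otimes>\<^sub>M M2) (N1 \<times> space M2) + emeasure (M1 \<Otimes>\<^sub>M M2) (space M1 \<times> N2)"
      by (rule emeasure_subadditive) (use N1 N2 in auto)
    also have "\<dots> = 0"
      using N1 N2 M2.emeasure_pair_measure_Times[OF N1(1) sets.top[of M2]] M2.emeasure_pair_measure_Times[OF sets.top[of M1] N2(1)]
      by simp
    finally show "emeasure (M1 \<Otimes>\<^sub>M M2) (N1 \<times> space M2 \<union> space M1 \<times> N2) = 0" by simp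
  qed
qed

lemma filterlim_fst_prod: "filterlim fst A (A \<times>\<^sub>F B)"
  unfolding filterlim_def by (rule filtermap_fst_prod_filter)

lemma filterlim_snd_prod: "filterlim snd B (A \<times>\<^sub>F B)"
  unfolding filterlim_def by (rule filtermap_snd_prod_filter)


lemma unif_bnd: "0 \<le> unif (\<sigma>::'a::finite) \<and> unif \<sigma> \<le> 1"
  by (simp add: unif_def)

lemma sup_norm_01:
  assumes "\<And>\<sigma>. 0 \<le> a \<sigma> \<and> a \<sigma> \<le> 1" "\<And>\<sigma>. 0 \<le> b \<sigma> \<and> b \<sigma> \<le> 1"
  shows "sup_norm (\<lambda>\<sigma>::'a::finite. a \<sigma> - b \<sigma>) \<le> 1"
proof (rule sup_norm_le)
  fix \<sigma> show "\<bar>a \<sigma> - b \<sigma>\<bar> \<le> 1" using assms[of \<sigma>] by auto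
qed

definition thetaStarP :: "('a::finite list \<Rightarrow> 'a \<Rightarrow> real) \<Rightarrow> real" where
  "thetaStarP phi = (real CARD('a) - 1) / real CARD('a) *
     infsum (\<lambda>x. sup_norm (\<lambda>\<sigma>. phi x \<sigma> - unif \<sigma>) / real CARD('a) ^ (2 * length x)) UNIV"

lemma theta_det:
  fixes s1 s2 :: "nat \<Rightarrow> 'a::finite list" and phi :: "'a list \<Rightarrow> 'a \<Rightarrow> real"
  assumes l1: "\<And>x \<sigma>. (\<lambda>n. sym_deriv (s1 n) x \<sigma>) \<longlonglongrightarrow> phi x \<sigma>"
    and l2: "\<And>x \<sigma>. (\<lambda>n. sym_deriv (s2 n) x \<sigma>) \<longlonglongrightarrow> unif \<sigma>"
    and pb: "\<And>x \<sigma>. 0 \<le> phi x \<sigma> \<and> phi x \<sigma> \<le> 1"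
  shows "((\<lambda>(n1, n2). theta_sum (s1 n1) (s2 n2)) \<longlongrightarrow> thetaStarP phi) (sequentially \<times>\<^sub>F sequentially)"
proof (cases "CARD('a) = 1")
  case True
  then show ?thesis by (simp add: theta_sum_def thetaStarP_def split_def)
next
  case False
  have "0 < CARD('a)" by simp
  then have N2: "2 \<le> CARD('a)" using False by linarith
  define N where "N = real CARD('a)"
  define w where "w x = 1 / N ^ (2 * length x)" for x :: "'a list"
  define t where "t x = sup_norm (\<lambda>\<sigma>. phi x \<sigma> - unif \<sigma>) / N ^ (2 * length x)" for x
  define f where "f p x = sup_norm (\<lambda>\<sigma>. sym_deriv (s1 (fst p)) x \<sigma> - sym_deriv (s2 (snd p)) x \<sigma>) / N ^ (2 * length x)"
    for p :: "nat \<times> nat" and x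
  have Npos: "0 < N" unfolding N_def by simp
  have ws: "w summable_on A" for A unfolding w_def N_def by (rule weight_summable[OF N2])
  have w0: "0 \<le> w x" for x unfolding w_def using Npos by simp
  have tb: "0 \<le> t x \<and> t x \<le> w x" for x
    unfolding t_def w_def using Npos sup_norm_nonneg sup_norm_01[OF pb unif_bnd]
    by (auto intro!: divide_right_mono divide_nonneg_pos)
  have fb: "0 \<le> f p x \<and> f p x \<le> w x" for p x
    unfolding f_def w_def using Npos sup_norm_nonneg sup_norm_01[OF sym_deriv_bnd sym_deriv_bnd]
    by (auto intro!: divide_right_mono divide_nonneg_pos)
  have ts: "t summable_on UNIV" by (rule summable_on_comparison_test[OF ws]) (use tb in auto)
  have fs: "f p summable_on UNIV" for p by (rule summable_on_comparison_test[OF ws]) (use fb in auto)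
  have lim_x: "((\<lambda>p. f p x - t x) \<longlongrightarrow> 0) (sequentially \<times>\<^sub>F sequentially)" for x
  proof -
    have "((\<lambda>p. f p x) \<longlongrightarrow> t x) (sequentially \<times>\<^sub>F sequentially)"
      unfolding f_def t_def
    proof (intro tendsto_divide tendsto_const tendsto_sup_norm tendsto_diff)
      fix \<sigma>
      show "((\<lambda>p. sym_deriv (s1 (fst p)) x \<sigma>) \<longlongrightarrow> phi x \<sigma>) (sequentially \<times>\<^sub>F sequentially)"
        by (rule filterlim_compose[OF l1 filterlim_fst_prod])
      show "((\<lambda>p. sym_deriv (s2 (snd p)) x \<sigma>) \<longlongrightarrow> unif \<sigma>) (sequentially \<times>\<^sub>F sequentially)"
        by (rule filterlim_compose[OF l2 filterlim_snd_prod])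
    qed (use Npos in simp)
    then show ?thesis by (simp add: Lim_null[symmetric])
  qed
  have "((\<lambda>p. infsum (\<lambda>x. f p x - t x) UNIV) \<longlongrightarrow> 0) (sequentially \<times>\<^sub>F sequentially)"
  proof (rule tannery_infsum[OF _ _ lim_x])
    show "(\<lambda>x. 2 * w x) summable_on UNIV" by (rule summable_on_cmult_right[OF ws])
    show "\<bar>f p x - t x\<bar> \<le> 2 * w x" for p x using fb[of p x] tb[of x] by linarith
  qed
  moreover have "infsum (\<lambda>x. f p x - t x) UNIV = infsum (f p) UNIV - infsum t UNIV" for p
  proof -
    have "infsum (\<lambda>x. f p x + - t x) UNIV = infsum (f p) UNIV + infsum (\<lambda>x. - t x) UNIV"
      by (rule infsum_add[OF fs]) (use ts summable_on_uminus in auto)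
    then show ?thesis by (simp add: infsum_uminus)
  qed
  ultimately have "((\<lambda>p. infsum (f p) UNIV - infsum t UNIV) \<longlongrightarrow> 0) (sequentially \<times>\<^sub>F sequentially)" by simp
  then have "((\<lambda>p. infsum (f p) UNIV) \<longlongrightarrow> infsum t UNIV) (sequentially \<times>\<^sub>F sequentially)"
    by (simp add: Lim_null[symmetric])
  then have "((\<lambda>p. (N - 1) / N * infsum (f p) UNIV) \<longlongrightarrow> (N - 1) / N * infsum t UNIV) (sequentially \<times>\<^sub>F sequentially)"
    by (intro tendsto_mult tendsto_const)
  moreover have "(\<lambda>(n1, n2). theta_sum (s1 n1) (s2 n2)) = (\<lambda>p. (N - 1) / N * infsum (f p) UNIV)"
    by (auto simp: fun_eq_iff theta_sum_def f_def N_def intro!: infsum_cong)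
  moreover have "thetaStarP phi = (N - 1) / N * infsum t UNIV"
    by (auto simp: thetaStarP_def t_def N_def intro!: infsum_cong)
  ultimately show ?thesis by simp
qed


lemma law_prob: "is_stream_law G M \<Longrightarrow> prob_space M"
  by (simp add: is_stream_law_def)

lemma Theta_conv_all:
  fixes G :: "('q::finite, 'a::finite) pfsa"
  assumes pf: "is_pfsa G" and sc: "strongly_connected G"
  shows "\<forall>M1 M2. is_stream_law G M1 \<longrightarrow> is_stream_law (W :: (unit, 'a) pfsa) M2 \<longrightarrow>
      (AE \<omega> in M1 \<Otimes>\<^sub>M M2.
         ((\<lambda>(n1, n2). theta_sum (stake n1 (fst \<omega>)) (stake n2 (snd \<omega>))) \<longlongrightarrow> thetaStarP (phiG G))
           (sequentially \<times>\<^sub>F sequentially))"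
proof (intro allI impI)
  fix M1 :: "'a stream measure" and M2 :: "'a stream measure"
  assume l1: "is_stream_law G M1" and l2: "is_stream_law (W :: (unit, 'a) pfsa) M2"
  interpret sc_stream_law G M1 by unfold_locales (use pf sc l1 in auto)
  have "AE z in M1 \<Otimes>\<^sub>M M2. (\<forall>x \<sigma>. (\<lambda>n. sym_deriv (stake n (fst z)) x \<sigma>) \<longlonglongrightarrow> phiG G x \<sigma>)
        \<and> (\<forall>x \<sigma>. (\<lambda>n. sym_deriv (stake n (snd z)) x \<sigma>) \<longlonglongrightarrow> unif \<sigma>)"
    by (rule AE_pair_both[OF law_prob[OF l1] law_prob[OF l2] phiG_conv sd_conv_W[OF l2]])
  then show "AE \<omega> in M1 \<Otimes>\<^sub>M M2.
         ((\<lambda>(n1, n2). theta_sum (stake n1 (fst \<omega>)) (stake n2 (snd \<omega>))) \<longlongrightarrow> thetaStarP (phiG G))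
           (sequentially \<times>\<^sub>F sequentially)"
  proof eventually_elim
    case (elim z)
    show ?case by (rule theta_det) (use elim phiG_bnd in auto)
  qed
qed

lemma Theta_eq:
  fixes G :: "('q::finite, 'a::finite) pfsa"
  assumes pf: "is_pfsa G" and sc: "strongly_connected G" and law: "is_stream_law G M"
  shows "Theta G (W :: (unit, 'a) pfsa) = thetaStarP (phiG G)"
  unfolding Theta_def
proof (rule the_equality)
  show "\<forall>M1 M2. is_stream_law G M1 \<longrightarrow> is_stream_law (W :: (unit, 'a) pfsa) M2 \<longrightarrow>
      (AE \<omega> in M1 \<Otimes>\<^sub>M M2.
         ((\<lambda>(n1, n2). theta_sum (stake n1 (fst \<omega>)) (stake n2 (snd \<omega>))) \<longlongrightarrow> thetaStarP (phiG G))
           (sequentially \<times>\<^sub>F sequentially))"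
    by (rule Theta_conv_all[OF pf sc])
  fix \<theta>
  assume H: "\<forall>M1 M2. is_stream_law G M1 \<longrightarrow> is_stream_law (W :: (unit, 'a) pfsa) M2 \<longrightarrow>
      (AE \<omega> in M1 \<Otimes>\<^sub>M M2.
         ((\<lambda>(n1, n2). theta_sum (stake n1 (fst \<omega>)) (stake n2 (snd \<omega>))) \<longlongrightarrow> \<theta>)
           (sequentially \<times>\<^sub>F sequentially))"
  interpret PP: prob_space "M \<Otimes>\<^sub>M (MWu :: 'a stream measure)"
    by (rule prob_space_pair[OF law_prob[OF law] law_prob[OF MWu_law]])
  have a1: "AE \<omega> in M \<Otimes>\<^sub>M MWu.
         ((\<lambda>(n1, n2). theta_sum (stake n1 (fst \<omega>)) (stake n2 (snd \<omega>))) \<longlongrightarrow> \<theta>)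
           (sequentially \<times>\<^sub>F sequentially)"
    using H law MWu_law by blast
  have a2: "AE \<omega> in M \<Otimes>\<^sub>M MWu.
         ((\<lambda>(n1, n2). theta_sum (stake n1 (fst \<omega>)) (stake n2 (snd \<omega>))) \<longlongrightarrow> thetaStarP (phiG G))
           (sequentially \<times>\<^sub>F sequentially)"
    using Theta_conv_all[OF pf sc] law MWu_law by blast
  have "AE \<omega> in M \<Otimes>\<^sub>M (MWu :: 'a stream measure). \<theta> = thetaStarP (phiG G)"
    using a1 a2
  proof eventually_elim
    case (elim \<omega>)
    have nb: "(sequentially \<times>\<^sub>F sequentially :: (nat \<times> nat) filter) \<noteq> bot"
      by (simp add: prod_filter_eq_bot)
    show ?case by (rule tendsto_unique[OF nb elim(1) elim(2)])
  qed
  then show "\<theta> = thetaStarP (phiG G)" by simp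
qed


lemma finite_len_le: "finite {x :: 'a::finite list. real (length x) \<le> l}"
proof (rule finite_subset)
  show "{x :: 'a list. real (length x) \<le> l} \<subseteq> {x. set x \<subseteq> UNIV \<and> length x \<le> nat \<lceil>l\<rceil>}"
    by auto linarith
  show "finite {x :: 'a list. set x \<subseteq> UNIV \<and> length x \<le> nat \<lceil>l\<rceil>}"
    by (rule finite_lists_length_le) simp
qed

lemma final_bound:
  fixes phi :: "'a::finite list \<Rightarrow> 'a \<Rightarrow> real" and \<epsilon> :: real
  assumes pb: "\<And>x \<sigma>. 0 \<le> phi x \<sigma> \<and> phi x \<sigma> \<le> 1" and e: "\<epsilon> > 0"
  defines "l \<equiv> ln (1 / \<epsilon>) / ln (real CARD('a))"
  shows "\<bar>thetaStarP phi - (real CARD('a) - 1) / real CARD('a) *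
     (\<Sum>x\<in>{x :: 'a list. real (length x) \<le> l}.
        sup_norm (\<lambda>\<sigma>. phi x \<sigma> - unif \<sigma>) / real CARD('a) ^ (2 * length x))\<bar> \<le> \<epsilon>"
proof (cases "CARD('a) = 1")
  case True
  then show ?thesis using e by (simp add: thetaStarP_def)
next
  case False
  have "0 < CARD('a)" by simp
  then have N2: "2 \<le> CARD('a)" using False by linarith
  define N where "N = real CARD('a)"
  have N2': "2 \<le> N" using N2 by (simp add: N_def)
  define S where "S = {x :: 'a list. real (length x) \<le> l}"
  define w where "w x = 1 / N ^ (2 * length x)" for x :: "'a list"
  define t where "t x = sup_norm (\<lambda>\<sigma>. phi x \<sigma> - unif \<sigma>) / N ^ (2 * length x)" for x
  have Npos: "0 < N" using N2' by simp
  have ws: "w summable_on A" for A unfolding w_def N_def by (rule weight_summable[OF N2])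
  have tb: "0 \<le> t x \<and> t x \<le> w x" for x
    unfolding t_def w_def using Npos sup_norm_nonneg sup_norm_01[OF pb unif_bnd]
    by (auto intro!: divide_right_mono divide_nonneg_pos)
  have ts: "t summable_on A" for A by (rule summable_on_comparison_test[OF ws]) (use tb in auto)
  have finS: "finite S" unfolding S_def by (rule finite_len_le)
  have "infsum t UNIV = infsum t (S \<union> (UNIV - S))" by simp
  also have "\<dots> = infsum t S + infsum t (UNIV - S)" by (rule infsum_Un_disjoint) (use ts in auto)
  finally have split: "infsum t UNIV = sum t S + infsum t (UNIV - S)" using finS by simp
  define K where "K = nat (\<lfloor>l\<rfloor> + 1)"
  have Kl: "l < real K" unfolding K_def by linarith
  have lenK: "K \<le> length x" if "x \<in> UNIV - S" for x
  proof -
    have "l < real (length x)" using that by (auto simp: S_def)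
    then have "\<lfloor>l\<rfloor> + 1 \<le> int (length x)" by linarith
    then show ?thesis unfolding K_def by linarith
  qed
  have tail: "infsum t (UNIV - S) \<le> (1 / N) ^ K * (N / (N - 1))"
  proof (rule infsum_le_finite_sums[OF ts])
    fix F assume F: "finite F" "F \<subseteq> UNIV - S"
    have "sum t F \<le> sum w F" using tb by (intro sum_mono) auto
    also have "\<dots> \<le> (1 / N) ^ K * (N / (N - 1))"
      unfolding w_def N_def by (rule weight_sum_bound[OF N2 F(1)]) (use F lenK in auto)
    finally show "sum t F \<le> (1 / N) ^ K * (N / (N - 1))" .
  qed
  have tail0: "0 \<le> infsum t (UNIV - S)" by (rule infsum_nonneg) (use tb in auto)
  have "(1 / N) ^ K < \<epsilon>"
  proof -
    have lnN: "0 < ln N" using N2' by simp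
    have "N powr l = 1 / \<epsilon>"
      using lnN e Npos by (simp add: powr_def l_def N_def)
    moreover have "N powr l < N powr (real K)" using Kl N2' by simp
    ultimately have "1 / \<epsilon> < N ^ K" using Npos by (simp add: powr_realpow)
    then show ?thesis using e Npos by (simp add: power_one_over field_simps)
  qed
  have eqT: "thetaStarP phi = (N - 1) / N * infsum t UNIV"
    by (auto simp: thetaStarP_def t_def N_def intro!: infsum_cong)
  have eqZ: "(\<Sum>x\<in>{x :: 'a list. real (length x) \<le> l}. sup_norm (\<lambda>\<sigma>. phi x \<sigma> - unif \<sigma>) / real CARD('a) ^ (2 * length x))
      = sum t S" by (simp add: S_def t_def N_def)
  have c0: "0 \<le> (N - 1) / N" using N2' by simp
  have "thetaStarP phi - (N - 1) / N * sum t S = (N - 1) / N * infsum t (UNIV - S)"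
    unfolding eqT split by (simp add: algebra_simps)
  moreover have "(N - 1) / N * infsum t (UNIV - S) \<le> (N - 1) / N * ((1 / N) ^ K * (N / (N - 1)))"
    by (rule mult_left_mono[OF tail c0])
  moreover have "(N - 1) / N * ((1 / N) ^ K * (N / (N - 1))) = (1 / N) ^ K"
    using N2' by (simp add: field_simps)
  moreover have "0 \<le> (N - 1) / N * infsum t (UNIV - S)" using c0 tail0 by (rule mult_nonneg_nonneg)
  ultimately have "\<bar>thetaStarP phi - (N - 1) / N * sum t S\<bar> \<le> \<epsilon>"
    using \<open>(1 / N) ^ K < \<epsilon>\<close> by linarith
  then show ?thesis unfolding eqZ N_def .
qed


theorem mainTheorem14:
  fixes G :: "('q::finite, 'a::finite) pfsa"
    and M :: "'a stream measure"
    and \<epsilon> :: real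
  assumes "is_pfsa G" and "strongly_connected G"
    and "is_stream_law G M"
    and "\<epsilon> > 0"
  shows "AE \<omega> in M. \<exists>L.
           ((\<lambda>n. \<bar>Theta G (W :: (unit, 'a) pfsa)
                  - zeta_hat (stake n \<omega>) (ln (1 / \<epsilon>) / ln (real CARD('a)))\<bar>) \<longlonglongrightarrow> L)
           \<and> L \<le> \<epsilon>"
proof -
  interpret sc_stream_law G M by unfold_locales (use assms in auto)
  define l where "l = ln (1 / \<epsilon>) / ln (real CARD('a))"
  have Th: "Theta G (W :: (unit, 'a) pfsa) = thetaStarP (phiG G)"
    by (rule Theta_eq[OF assms(1,2,3)])
  define Z where "Z = (real CARD('a) - 1) / real CARD('a) *
     (\<Sum>x\<in>{x :: 'a list. real (length x) \<le> l}.
        sup_norm (\<lambda>\<sigma>. phiG G x \<sigma> - unif \<sigma>) / real CARD('a) ^ (2 * length x))"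
  have bnd: "\<bar>thetaStarP (phiG G) - Z\<bar> \<le> \<epsilon>"
    unfolding Z_def l_def by (rule final_bound[OF phiG_bnd assms(4)])
  show ?thesis
    using phiG_conv
  proof eventually_elim
    case (elim \<omega>)
    have "(\<lambda>n. zeta_hat (stake n \<omega>) l) \<longlonglongrightarrow> Z"
      unfolding zeta_hat_def Z_def
      by (intro tendsto_intros tendsto_sup_norm) (use elim in auto)
    then have "(\<lambda>n. \<bar>Theta G (W :: (unit, 'a) pfsa) - zeta_hat (stake n \<omega>) l\<bar>) \<longlonglongrightarrow> \<bar>thetaStarP (phiG G) - Z\<bar>"
      unfolding Th by (intro tendsto_intros)
    then show ?case using bnd unfolding l_def by blast
  qed
qed


end
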